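(* Fix $R_{\rm eff}>0$ and suppose that all link SNRs over all links and slots are i.i.d. with the noncentral chi-squared CDF $F(\gamma;v,\lambda)=1-Q_{v/2}(\sqrt\lambda,\sqrt\gamma)$, $\gamma\ge0$, with degrees of freedom $v>0$ and non-centrality $\lambda\ge0$. Then: (i) (Rayleigh fading: $v=2$, $\lambda=0$, i.e. density $e^{-\gamma/2}/2$) $\bar J^{\text{no relay}}_K(R_{\rm eff})=\infty$ for all $K\ge1$, while $\bar J_K(R_{\rm eff})<\infty$ for all $K\ge2$; (ii) (Rician fading: $v=2$, $\lambda>0$) $\bar J^{\text{no relay}}_K(R_{\rm eff})=\infty$ for all $K\ge1$, while $\bar J_K(R_{\rm eff})<\infty$ for all $K\ge2$; (iii) ($v=2s$ with an integer $s\ge2$, any $\lambda\ge0$) $\bar J^{\text{no relay}}_K(R_{\rm eff})<\infty$ for all $K\ge1$ and $\bar J_K(R_{\rm eff})<\infty$ for all $K\ge2$.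
   Context: $Q_M(a,b)=\int_b^\infty x(x/a)^{M-1}e^{-(x^2+a^2)/2}I_{M-1}(ax)\,dx$ is the generalized Marcum Q-function (with $I_{M-1}$ the modified Bessel function of the first kind; for $a=0$ take the limit). Notation: $I(x)=\log(1+x)$, $I^{-1}(x)=e^x-1$, $\tilde\gamma_k=\max(\gamma^{SD}_k,\gamma^{RD}_k)$. Relay problem with $K$ slots and message size $B=KR_{\rm eff}$ nats: in slot $k$ the link SNRs are $(\gamma^{SR}_k,\gamma^{SD}_k,\gamma^{RD}_k)$; a power $p_k\ge0$ is chosen causally (as a function of the SNRs of slots $1,\dots,k$). Remaining information: $b^R_1=b^D_1=B$; if $b^R_k>0$ (Phase 1, the source transmits) then $b^R_{k+1}=b^R_k-I(p_k\gamma^{SR}_k)$, $b^D_{k+1}=b^D_k-I(p_k\gamma^{SD}_k)$; if $b^R_k\le0$ (Phase 2, whichever of source/relay has the larger SNR to the destination transmits) then $b^R_{k+1}=b^R_k$, $b^D_{k+1}=b^D_k-I(p_k\tilde\gamma_k)$. The constraint is $b^D_{K+1}\le0$ a.s. The NMESE is $\bar J_K(R_{\rm eff})=\frac1K\mathbb{E}_{\boldsymbol\gamma_1}[J^\star(\boldsymbol\gamma_1)]$, where $J^\star(\boldsymbol\gamma_1)$ is the infimum over causal feasible policies of $\mathbb{E}[\sum_{k=1}^Kp_k\mid\boldsymbol\gamma_1]$. "No relaying" means the same problem with $\gamma^{SR}_k\equiv0$ (constraint $\sum_kI(p_k\gamma^{SD}_k)\ge B$); its NMESE is $\bar J^{\text{no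 relay}}_K(R_{\rm eff})$. *)

theory Defs
  imports "HOL-Probability.Probability"
begin

definition bessel_I :: "real \<Rightarrow> real \<Rightarrow> real" where
  "bessel_I nu x = (\<Sum>k. (x / 2) powr (2 * real k + nu) / (fact k * Gamma (real k + nu + 1)))"

text \<open>Generalized Marcum Q-function; for a = 0 the integrand is replaced by its limit
  (x/a)^(M-1) I_(M-1)(a x) \<rightarrow> x^(2M-2) / (2^(M-1) Gamma M).\<close>
definition marcumQ :: "real \<Rightarrow> real \<Rightarrow> real \<Rightarrow> real" where
  "marcumQ M a b =
     (if a = 0 then
        (\<integral>x\<in>{b..}. x * (x powr (2 * M - 2) / (2 powr (M - 1) * Gamma M)) * exp (- (x\<^sup>2) / 2) \<partial>lborel)
      else
        (\<integral>x\<in>{b..}. x * (x / a) powr (M - 1) * exp (- (x\<^sup>2 + a\<^sup>2) / 2) * bessel_I (M - 1) (a * x) \<partial>lborel))"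

definition ncx2_dist :: "real \<Rightarrow> real \<Rightarrow> real measure \<Rightarrow> bool" where
  "ncx2_dist v lam D \<longleftrightarrow> v > 0 \<and> lam \<ge> 0 \<and> prob_space D \<and> sets D = sets borel \<and>
     (\<forall>g::real. measure D {..g} = (if g < 0 then 0 else 1 - marcumQ (v / 2) (sqrt lam) (sqrt g)))"

text \<open>SNRs of one slot: (gamma_SR, gamma_SD, gamma_RD). Slots are indexed 0..K-1
  (slot k here is slot k+1 of the paper).\<close>
type_synonym snr = "real \<times> real \<times> real"

text \<open>Remaining information (b^R, b^D) before slot k, for powers P and SNRs g.\<close>
fun remaining :: "real \<Rightarrow> (nat \<Rightarrow> real) \<Rightarrow> (nat \<Rightarrow> snr) \<Rightarrow> nat \<Rightarrow> real \<times> real" where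
  "remaining B P g 0 = (B, B)"
| "remaining B P g (Suc k) =
     (let (bR, bD) = remaining B P g k; (sr, sd, rd) = g k in
      if bR > 0 then (bR - ln (1 + P k * sr), bD - ln (1 + P k * sd))
      else (bR, bD - ln (1 + P k * max sd rd)))"

text \<open>A policy p: power p k g in slot k as a function of the whole SNR sequence g;
  causality = p k g depends only on g 0, ..., g k.\<close>
definition causal_policy :: "(nat \<Rightarrow> (nat \<Rightarrow> snr) \<Rightarrow> real) \<Rightarrow> bool" where
  "causal_policy p \<longleftrightarrow> (\<forall>k g g'. (\<forall>j\<le>k. g j = g' j) \<longrightarrow> p k g = p k g')"

text \<open>Admissible policies given first-slot SNRs g1, for K slots, message size B, slot
  SNR law S (the slots are i.i.d. with law S): nonnegative, causal, measurable powers such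
  that the destination decodes (b^D_(K+1) \<le> 0) almost surely given g1.\<close>
definition admissible ::
  "nat \<Rightarrow> real \<Rightarrow> snr measure \<Rightarrow> snr \<Rightarrow> (nat \<Rightarrow> (nat \<Rightarrow> snr) \<Rightarrow> real) \<Rightarrow> bool" where
  "admissible K B S g1 p \<longleftrightarrow>
     (\<forall>k<K. \<forall>g. p k g \<ge> 0) \<and> causal_policy p \<and>
     (\<forall>k<K. p k \<in> borel_measurable (PiM {..<K} (\<lambda>_. S))) \<and>
     (AE g in PiM {1..<K} (\<lambda>_. S).
        snd (remaining B (\<lambda>k. p k (g(0 := g1))) (g(0 := g1)) K) \<le> 0)"

definition Jstar :: "nat \<Rightarrow> real \<Rightarrow> snr measure \<Rightarrow> snr \<Rightarrow> ennreal" where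
  "Jstar K B S g1 = (INF p \<in> {p. admissible K B S g1 p}.
      \<integral>\<^sup>+ g. ennreal (\<Sum>k<K. p k (g(0 := g1))) \<partial>(PiM {1..<K} (\<lambda>_. S)))"

definition nmese :: "nat \<Rightarrow> real \<Rightarrow> snr measure \<Rightarrow> ennreal" where
  "nmese K Reff S = ennreal (1 / real K) * (\<integral>\<^sup>+ g1. Jstar K (real K * Reff) S g1 \<partial>S)"

definition relay_slot :: "real measure \<Rightarrow> snr measure" where
  "relay_slot D = D \<Otimes>\<^sub>M (D \<Otimes>\<^sub>M D)"

text \<open>No relaying: the same problem with gamma_SR identically 0.\<close>
definition no_relay_slot :: "real measure \<Rightarrow> snr measure" where
  "no_relay_slot D = return borel 0 \<Otimes>\<^sub>M (D \<Otimes>\<^sub>M D)"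

end

theory Submission
  imports Defs
begin

definition gfun :: "nat \<Rightarrow> real \<Rightarrow> real" where
  "gfun n x = indicator {0..} x * (x^(2*n+1) * exp (-(x\<^sup>2)/2)) / (2^n * fact n)"

lemma gauss_odd_half:
  "has_bochner_integral lborel (\<lambda>x::real. indicator {0..} x * (x^(2*k+1) * exp (-(x\<^sup>2)/2))) (2^k * fact k)"
proof -
  have h: "has_bochner_integral lborel (\<lambda>x::real. indicator {0..} x *\<^sub>R (exp (-x\<^sup>2)*x^(2 * k + 1))) (fact k / 2)"
    by (rule gaussian_moment_odd_pos)
  let ?c = "1 / sqrt 2 :: real"
  have "has_bochner_integral lborel (\<lambda>x. (\<lambda>x::real. indicator {0..} x *\<^sub>R (exp (-x\<^sup>2)*x^(2 * k + 1))) (0 + ?c * x)) ((fact k / 2) /\<^sub>R \<bar>?c\<bar>)"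
    using h by (subst (asm) lborel_has_bochner_integral_real_affine_iff[where c = ?c and t = 0]) auto
  then have h2: "has_bochner_integral lborel (\<lambda>x::real. indicator {0..} x * (exp (-(x\<^sup>2)/2) * (x^(2*k+1) / sqrt 2 ^ (2*k+1)))) (fact k / 2 * sqrt 2)"
  proof (rule has_bochner_integral_cong[THEN iffD1, rotated 3])
    fix x :: real
    have "indicator {0..} (?c * x) = (indicator {0..} x :: real)"
      by (auto simp: indicator_def zero_le_divide_iff)
    moreover have "(?c * x)\<^sup>2 = x\<^sup>2/2" by (simp add: power_mult_distrib power_divide)
    moreover have "(?c * x)^(2*k+1) = x^(2*k+1) / sqrt 2 ^ (2*k+1)" by (simp add: power_mult_distrib power_divide)
    ultimately show "(\<lambda>x::real. indicator {0..} x *\<^sub>R (exp (-x\<^sup>2)*x^(2 * k + 1))) (0 + ?c * x) = indicator {0..} x * (exp (-(x\<^sup>2)/2) * (x^(2*k+1) / sqrt 2 ^ (2*k+1)))"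
      by simp
  qed auto
  have s0: "sqrt 2 ^ (2*k) = (2::real)^k" by (simp add: power_mult)
  have s: "sqrt 2 ^ (2*k+1) = 2^k * sqrt 2"
    using s0 by (simp only: power_add) simp
  have "has_bochner_integral lborel (\<lambda>x::real. sqrt 2 ^ (2*k+1) * (indicator {0..} x * (exp (-(x\<^sup>2)/2) * (x^(2*k+1) / sqrt 2 ^ (2*k+1))))) (sqrt 2 ^ (2*k+1) * (fact k / 2 * sqrt 2))"
    by (rule has_bochner_integral_mult_right[OF h2])
  then show ?thesis
    by (rule has_bochner_integral_cong[THEN iffD1, rotated 3]) (auto simp: s field_simps s0[unfolded mult.commute[of 2 k]])
qed

lemma gfun_integral: "has_bochner_integral lborel (gfun n) 1"
proof -
  have "has_bochner_integral lborel (\<lambda>x::real. indicator {0..} x * (x^(2*n+1) * exp (-(x\<^sup>2)/2)) / (2^n * fact n)) ((2^n * fact n) / (2^n * fact n))"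
    by (rule has_bochner_integral_divide_zero[OF gauss_odd_half])
  then show ?thesis unfolding gfun_def[abs_def] by simp
qed


definition wgt :: "real \<Rightarrow> nat \<Rightarrow> real" where
  "wgt a k = exp (-(a\<^sup>2)/2) * (a\<^sup>2/2)^k / fact k"

definition qf :: "real \<Rightarrow> real \<Rightarrow> real \<Rightarrow> real" where
  "qf M a x = (if a = 0 then x * (x powr (2 * M - 2) / (2 powr (M - 1) * Gamma M)) * exp (- (x\<^sup>2) / 2)
      else x * (x / a) powr (M - 1) * exp (- (x\<^sup>2 + a\<^sup>2) / 2) * bessel_I (M - 1) (a * x))"

lemma marcumQ_qf: "marcumQ M a b = (\<integral>x\<in>{b..}. qf M a x \<partial>lborel)"
  by (cases "a = 0") (simp_all add: marcumQ_def qf_def)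

lemma term_identity:
  assumes x: "x > 0" and a: "a > 0"
  shows "x * (x/a)^m * exp (-(x\<^sup>2+a\<^sup>2)/2) * ((a*x/2)^(2*k+m) / (fact k * fact (k+m)))
     = wgt a k * gfun (k+m) x"
proof -
  have e: "exp (-(x\<^sup>2+a\<^sup>2)/2) = exp (-(a\<^sup>2)/2) * exp (-(x\<^sup>2)/2)"
    by (simp add: exp_add[symmetric] field_simps)
  have p: "(x/a)^m * (a*x/2)^(2*k+m) = x^(2*k+2*m) * (a\<^sup>2/2)^k / 2^(k+m)"
  proof -
    have e1: "(a*x/2)^(2*k+m) = a^(2*k) * a^m * x^(2*k+m) / 2^(2*k+m)"
      by (simp add: power_mult_distrib power_divide power_add)
    have e2: "(x/a)^m = x^m / a^m" by (simp add: power_divide)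
    have e3: "(a\<^sup>2/2)^k = a^(2*k) / 2^k" by (simp add: power_divide power_mult)
    have e4: "(2::real)^(2*k+m) = 2^k * 2^(k+m)" by (simp add: power_add[symmetric] mult_2)
    have e5: "x^(2*k+2*m) = x^(2*k+m) * x^m" by (simp add: power_add[symmetric] algebra_simps)
    show ?thesis unfolding e1 e2 e3 e4 e5 using a by (simp add: field_simps)
  qed
  have "x * (x/a)^m * exp (-(x\<^sup>2+a\<^sup>2)/2) * ((a*x/2)^(2*k+m) / (fact k * fact (k+m)))
       = exp (-(a\<^sup>2)/2) * exp (-(x\<^sup>2)/2) * x * ((x/a)^m * (a*x/2)^(2*k+m)) / (fact k * fact (k+m))"
    unfolding e by (simp add: field_simps)
  also have "\<dots> = wgt a k * gfun (k+m) x"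
    using x unfolding p wgt_def gfun_def by (simp add: field_simps power_add)
  finally show ?thesis .
qed

lemma wg_summable: "summable (\<lambda>k. wgt a k * gfun (k+m) x)"
proof (rule summable_comparison_test)
  show "summable (\<lambda>k. \<bar>x\<bar>^(2*m+1) * ((a\<^sup>2*x\<^sup>2/2) ^ k /\<^sub>R fact k))"
    using exp_converges[of "a\<^sup>2*x\<^sup>2/2"] by (intro summable_mult) (simp add: sums_iff)
  show "\<exists>N. \<forall>n\<ge>N. norm (wgt a n * gfun (n + m) x) \<le> \<bar>x\<bar>^(2*m+1) * ((a\<^sup>2*x\<^sup>2/2) ^ n /\<^sub>R fact n)"
  proof (intro exI allI impI)
    fix n :: nat
    have "norm (wgt a n * gfun (n + m) x) = exp (-(a\<^sup>2)/2) * (a\<^sup>2/2)^n / fact n * (indicator {0..} x * (\<bar>x\<bar>^(2*(n+m)+1) * exp (-(x\<^sup>2)/2)) / (2^(n+m) * fact (n+m)))"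
      unfolding wgt_def gfun_def by (simp add: abs_mult power_abs indicator_def)
    also have "\<dots> \<le> ((a\<^sup>2/2)^n / fact n) * (\<bar>x\<bar>^(2*(n+m)+1))"
    proof (rule mult_mono)
      show "exp (-(a\<^sup>2)/2) * (a\<^sup>2/2)^n / fact n \<le> (a\<^sup>2/2)^n / fact n"
        by (intro divide_right_mono mult_left_le_one_le) auto
      have h1: "1 \<le> (2::real)^(n+m) * fact (n+m)"
        using one_le_power[of "2::real" "n+m"] fact_ge_1[of "n+m", where 'a=real]
        by (metis mult_mono' one_le_numeral order_trans zero_le_one mult_1)
      have h2: "indicator {0..} x * (\<bar>x\<bar>^(2*(n+m)+1) * exp (-(x\<^sup>2)/2)) \<le> \<bar>x\<bar>^(2*(n+m)+1)"
      proof (cases "x \<ge> 0")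
        case False then have "indicator {0..} x = (0::real)" by (simp add: indicator_def)
        then show ?thesis by (simp only: mult_zero_left zero_le_power_abs)
      qed (simp add: indicator_def mult_left_le)
      show "indicator {0..} x * (\<bar>x\<bar>^(2*(n+m)+1) * exp (-(x\<^sup>2)/2)) / (2^(n+m) * fact (n+m)) \<le> \<bar>x\<bar>^(2*(n+m)+1)"
      proof -
        let ?N = "indicator {0..} x * (\<bar>x\<bar>^(2*(n+m)+1) * exp (-(x\<^sup>2)/2)) :: real"
        have "?N / (2^(n+m) * fact (n+m)) \<le> ?N / 1"
          by (rule divide_left_mono) (use h1 in auto)
        then show ?thesis using h2 by simp
      qed
    qed auto
    also have "\<dots> = \<bar>x\<bar>^(2*m+1) * ((a\<^sup>2*x\<^sup>2/2) ^ n /\<^sub>R fact n)"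
      using abs_mult_self_eq[of "x^n"] by (simp add: power_add power_mult power_mult_distrib field_simps power2_eq_square power_abs)
    finally show "norm (wgt a n * gfun (n + m) x) \<le> \<bar>x\<bar>^(2*m+1) * ((a\<^sup>2*x\<^sup>2/2) ^ n /\<^sub>R fact n)" .
  qed
qed

lemma qf_sums:
  assumes x: "x > 0" and a: "a \<ge> 0"
  shows "(\<lambda>k. wgt a k * gfun (k+m) x) sums qf (real (Suc m)) a x"
proof (cases "a = 0")
  case True
  have "(\<lambda>k. if k = 0 then gfun m x else 0) sums gfun (0 + m) x"
    using sums_single[of 0 "\<lambda>_. gfun m x"] by simp
  moreover have "(\<lambda>k. wgt a k * gfun (k+m) x) = (\<lambda>k. if k = 0 then gfun m x else 0)"
    using True by (auto simp: wgt_def)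
  moreover have "qf (real (Suc m)) a x = gfun m x"
  proof -
    have "x powr (2 * real (Suc m) - 2) = x ^ (2*m)"
      using x powr_realpow[OF x, of "2*m"] by (simp add: algebra_simps)
    moreover have "(2::real) powr (real (Suc m) - 1) = 2^m"
      using powr_realpow[of 2 m] by simp
    moreover have "Gamma (real (Suc m)) = fact m"
      using Gamma_fact[of m] by (simp add: add.commute)
    ultimately show ?thesis
      using True x by (simp add: qf_def gfun_def indicator_def field_simps)
  qed
  ultimately show ?thesis by simp
next
  case False
  with a have a: "a > 0" by simp
  define c where "c = x * (x/a)^m * exp (-(x\<^sup>2+a\<^sup>2)/2)"
  define u where "u k = (a*x/2)^(2*k+m) / (fact k * fact (k+m))" for k
  have cpos: "c > 0" using x a by (simp add: c_def)
  have wc: "wgt a k * gfun (k+m) x = c * u k" for k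
    using term_identity[OF x a, of m k] by (simp add: c_def u_def)
  have su: "summable u"
    using wg_summable[of a m x] cpos unfolding wc by simp
  have bI0: "bessel_I (real (Suc m) - 1) (a * x) = suminf u"
    unfolding bessel_I_def
  proof (rule arg_cong[where f=suminf], rule ext)
    fix k
    have "(a * x / 2) powr (2 * real k + (real (Suc m) - 1)) = (a*x/2)^(2*k+m)"
      using powr_realpow[of "a*x/2" "2*k+m"] a x by simp
    moreover have "Gamma (real k + (real (Suc m) - 1) + 1) = fact (k+m)"
      using Gamma_fact[of "k+m"] by (simp add: add.commute add.left_commute)
    ultimately show "(a * x / 2) powr (2 * real k + (real (Suc m) - 1)) / (fact k * Gamma (real k + (real (Suc m) - 1) + 1)) = u k"
      by (simp add: u_def)
  qed
  then have bI: "bessel_I (real m) (a * x) = suminf u" by simp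
  have "qf (real (Suc m)) a x = c * suminf u"
    using a x powr_realpow[of "x/a" m] by (simp add: qf_def c_def bI)
  also have "\<dots> = suminf (\<lambda>k. c * u k)" by (rule suminf_mult[OF su, symmetric])
  finally show ?thesis
    unfolding wc using su by (simp add: summable_sums)
qed


definition Qs :: "nat \<Rightarrow> real \<Rightarrow> real \<Rightarrow> real" where
  "Qs m a x = (\<Sum>k. wgt a k * gfun (k+m) x)"

lemma gfun_nonneg: "gfun n x \<ge> 0"
  by (auto simp: gfun_def indicator_def)

lemma gfun_meas[measurable]: "gfun n \<in> borel_measurable borel"
  unfolding gfun_def[abs_def] by measurable

lemma wgt_nonneg: "wgt a k \<ge> 0"
  by (simp add: wgt_def)

lemma wgt_sums: "wgt a sums 1"
proof -
  have h: "(\<lambda>k. exp (-(a\<^sup>2)/2) * ((a\<^sup>2/2)^k /\<^sub>R fact k)) sums (exp (-(a\<^sup>2)/2) * exp (a\<^sup>2/2))"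
    by (intro sums_mult exp_converges)
  have e: "exp (-(a\<^sup>2)/2) * exp (a\<^sup>2/2) = 1"
    by (simp add: exp_minus_inverse[symmetric] exp_minus)
  have w: "(\<lambda>k. exp (-(a\<^sup>2)/2) * ((a\<^sup>2/2)^k /\<^sub>R fact k)) = wgt a"
    by (rule ext) (simp add: wgt_def field_simps)
  show ?thesis using h unfolding e w .
qed

lemma gfun_zero: "gfun n 0 = 0"
  by (simp add: gfun_def)

lemma ind_qf:
  assumes b: "b \<ge> 0" and a: "a \<ge> 0"
  shows "indicator {b..} x * qf (real (Suc m)) a x = indicator {b..} x * Qs m a x"
proof (cases "x \<ge> b")
  case True
  show ?thesis
  proof (cases "x = 0")
    case True then show ?thesis by (simp add: qf_def Qs_def gfun_zero)
  next
    case False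
    with \<open>x \<ge> b\<close> b have "x > 0" by simp
    then show ?thesis using qf_sums[OF _ a, of x m] by (simp add: Qs_def sums_iff)
  qed
qed (simp add: indicator_def)

lemma Qs_meas[measurable]: "Qs m a \<in> borel_measurable borel"
  unfolding Qs_def[abs_def] by measurable

lemma Qs_nonneg: "Qs m a x \<ge> 0"
  unfolding Qs_def by (intro suminf_nonneg wg_summable mult_nonneg_nonneg wgt_nonneg gfun_nonneg)

lemma nn_Qs:
  assumes A: "A \<in> sets borel"
  shows "(\<integral>\<^sup>+x. ennreal (indicator A x * Qs m a x) \<partial>lborel)
       = (\<Sum>k. ennreal (wgt a k) * (\<integral>\<^sup>+x. ennreal (indicator A x * gfun (k+m) x) \<partial>lborel))"
proof -
  have "(\<integral>\<^sup>+x. ennreal (indicator A x * Qs m a x) \<partial>lborel)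
      = (\<integral>\<^sup>+x. (\<Sum>k. ennreal (wgt a k) * ennreal (indicator A x * gfun (k+m) x)) \<partial>lborel)"
  proof (rule nn_integral_cong)
    fix x
    have "(\<Sum>k. ennreal (wgt a k) * ennreal (indicator A x * gfun (k+m) x))
        = (\<Sum>k. ennreal (indicator A x * (wgt a k * gfun (k+m) x)))"
      by (intro arg_cong[where f=suminf] ext)
         (simp add: ennreal_mult'[symmetric] wgt_nonneg gfun_nonneg mult_ac)
    also have "\<dots> = ennreal (\<Sum>k. indicator A x * (wgt a k * gfun (k+m) x))"
      by (intro suminf_ennreal2 summable_mult wg_summable mult_nonneg_nonneg wgt_nonneg gfun_nonneg) simp
    also have "\<dots> = ennreal (indicator A x * Qs m a x)"
      unfolding Qs_def by (simp add: suminf_mult wg_summable)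
    finally show "ennreal (indicator A x * Qs m a x) = (\<Sum>k. ennreal (wgt a k) * ennreal (indicator A x * gfun (k+m) x))" ..
  qed
  also have "\<dots> = (\<Sum>k. (\<integral>\<^sup>+x. ennreal (wgt a k) * ennreal (indicator A x * gfun (k+m) x) \<partial>lborel))"
    by (rule nn_integral_suminf) (use A in measurable)
  also have "\<dots> = (\<Sum>k. ennreal (wgt a k) * (\<integral>\<^sup>+x. ennreal (indicator A x * gfun (k+m) x) \<partial>lborel))"
    by (intro arg_cong[where f=suminf] ext nn_integral_cmult) (use A in measurable)
  finally show ?thesis .
qed

lemma gfun_total: "(\<integral>\<^sup>+x. ennreal (gfun n x) \<partial>lborel) = 1"
proof -
  have "integrable lborel (gfun n)" using gfun_integral[of n] by (rule integrable.intros)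
  then have "(\<integral>\<^sup>+x. ennreal (gfun n x) \<partial>lborel) = ennreal (integral\<^sup>L lborel (gfun n))"
    by (intro nn_integral_eq_integral) (auto simp: gfun_nonneg)
  then show ?thesis using gfun_integral[of n] by (simp add: has_bochner_integral_integral_eq)
qed

lemma wgt_ennsum: "(\<Sum>k. ennreal (wgt a k)) = 1"
  using suminf_ennreal_eq[OF wgt_nonneg wgt_sums] by simp

lemma Phi0: "(\<integral>\<^sup>+x. ennreal (indicator {0..} x * Qs m a x) \<partial>lborel) = 1"
proof -
  have "(\<lambda>x. ennreal (indicator {0..} x * gfun n x)) = (\<lambda>x. ennreal (gfun n x))" for n
    by (simp add: gfun_def indicator_def fun_eq_iff)
  then show ?thesis
    by (simp only: nn_Qs[OF atLeast_borel] gfun_total wgt_ennsum mult_1_right)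
qed

lemma marcumQ_Phi:
  assumes b: "b \<ge> 0" and a: "a \<ge> 0"
  shows "marcumQ (real (Suc m)) a b = enn2real (\<integral>\<^sup>+x. ennreal (indicator {b..} x * Qs m a x) \<partial>lborel)"
proof -
  have "marcumQ (real (Suc m)) a b = (\<integral>x. indicator {b..} x * Qs m a x \<partial>lborel)"
  proof -
    have eq: "(\<lambda>x. indicator {b..} x *\<^sub>R qf (real (Suc m)) a x) = (\<lambda>x. indicator {b..} x * Qs m a x)"
      using ind_qf[OF b a] by (simp add: fun_eq_iff)
    show ?thesis by (simp only: marcumQ_qf set_lebesgue_integral_def eq)
  qed
  also have "\<dots> = enn2real (\<integral>\<^sup>+x. ennreal (indicator {b..} x * Qs m a x) \<partial>lborel)"
    by (rule integral_eq_nn_integral) (auto simp: Qs_nonneg)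
  finally show ?thesis .
qed

lemma Phi_split:
  assumes r: "r \<ge> 0"
  shows "(\<integral>\<^sup>+x. ennreal (indicator {0..<r} x * Qs m a x) \<partial>lborel) + (\<integral>\<^sup>+x. ennreal (indicator {r..} x * Qs m a x) \<partial>lborel) = 1"
proof -
  have "(\<integral>\<^sup>+x. ennreal (indicator {0..<r} x * Qs m a x) \<partial>lborel) + (\<integral>\<^sup>+x. ennreal (indicator {r..} x * Qs m a x) \<partial>lborel)
     = (\<integral>\<^sup>+x. ennreal (indicator {0..<r} x * Qs m a x) + ennreal (indicator {r..} x * Qs m a x) \<partial>lborel)"
    by (rule nn_integral_add[symmetric]) auto
  also have "\<dots> = (\<integral>\<^sup>+x. ennreal (indicator {0..} x * Qs m a x) \<partial>lborel)"
    using r by (intro nn_integral_cong) (auto simp: indicator_def Qs_nonneg)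
  finally show ?thesis using Phi0 by simp
qed


lemma gfun_le: "0 \<le> x \<Longrightarrow> x \<le> 1 \<Longrightarrow> gfun (k+m) x \<le> x^(2*m+1)"
proof -
  assume x: "0 \<le> x" "x \<le> 1"
  have "gfun (k+m) x \<le> x^(2*(k+m)+1) * exp (-(x\<^sup>2)/2)"
  proof -
    have h1: "1 \<le> (2::real)^(k+m) * fact (k+m)"
      using one_le_power[of "2::real" "k+m"] fact_ge_1[of "k+m", where 'a=real]
      by (metis mult_mono' one_le_numeral order_trans zero_le_one mult_1)
    have "x^(2*(k+m)+1) * exp (-(x\<^sup>2)/2) / (2^(k+m) * fact (k+m)) \<le> x^(2*(k+m)+1) * exp (-(x\<^sup>2)/2) / 1"
      by (rule divide_left_mono) (use h1 x in auto)
    then show ?thesis using x by (simp add: gfun_def)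
  qed
  also have "\<dots> \<le> x^(2*(k+m)+1)"
    using x by (intro mult_left_le) auto
  also have "\<dots> \<le> x^(2*m+1)"
    using x by (intro power_decreasing) auto
  finally show ?thesis .
qed

lemma Qs_le: "0 \<le> x \<Longrightarrow> x \<le> 1 \<Longrightarrow> Qs m a x \<le> x^(2*m+1)"
proof -
  assume x: "0 \<le> x" "x \<le> 1"
  have "Qs m a x \<le> (\<Sum>k. wgt a k * x^(2*m+1))"
    unfolding Qs_def
    by (intro suminf_le mult_left_mono gfun_le x wgt_nonneg wg_summable summable_mult2)
       (use wgt_sums in \<open>simp add: sums_iff\<close>)
  also have "\<dots> = x^(2*m+1)"
    using sums_mult2[OF wgt_sums[of a], of "x^(2*m+1)"] by (simp add: sums_iff)
  finally show ?thesis .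
qed

lemma Psi_upper:
  assumes r: "0 \<le> r" "r \<le> 1"
  shows "(\<integral>\<^sup>+x. ennreal (indicator {0..<r} x * Qs m a x) \<partial>lborel) \<le> ennreal (r^(2*m+2))"
proof -
  have "(\<integral>\<^sup>+x. ennreal (indicator {0..<r} x * Qs m a x) \<partial>lborel) \<le> (\<integral>\<^sup>+x. ennreal (r^(2*m+1)) * indicator {0..<r} x \<partial>lborel)"
  proof (rule nn_integral_mono)
    fix x
    show "ennreal (indicator {0..<r} x * Qs m a x) \<le> ennreal (r^(2*m+1)) * indicator {0..<r} x"
    proof (cases "x \<in> {0..<r}")
      case True
      then have "Qs m a x \<le> x^(2*m+1)" using r by (intro Qs_le) auto
      also have "\<dots> \<le> r^(2*m+1)" using True by (intro power_mono) auto
      finally show ?thesis using True by simp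
    qed simp
  qed
  also have "\<dots> = ennreal (r^(2*m+1)) * ennreal r"
    using r by (subst nn_integral_cmult_indicator) auto
  also have "\<dots> = ennreal (r^(2*m+2))"
    using r by (simp add: ennreal_mult'[symmetric])
  finally show ?thesis .
qed

lemma Psi_lower:
  assumes r: "0 \<le> r" "r \<le> 1"
  shows "ennreal (exp (-(a\<^sup>2)/2) * exp (-1/2) * r^2 / 4) \<le> (\<integral>\<^sup>+x. ennreal (indicator {0..<r} x * Qs 0 a x) \<partial>lborel)"
proof -
  define c where "c = exp (-(a\<^sup>2)/2) * exp (-1/2) * (r/2)"
  have c0: "c \<ge> 0" using r by (simp add: c_def)
  have "ennreal (exp (-(a\<^sup>2)/2) * exp (-1/2) * r^2 / 4) = ennreal c * ennreal (r - r/2)"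
    using r c0 by (simp add: ennreal_mult'[symmetric] c_def power2_eq_square)
  also have "\<dots> = (\<integral>\<^sup>+x. ennreal c * indicator {r/2..<r} x \<partial>lborel)"
    using r by (subst nn_integral_cmult_indicator) auto
  also have "\<dots> \<le> (\<integral>\<^sup>+x. ennreal (indicator {0..<r} x * Qs 0 a x) \<partial>lborel)"
  proof (rule nn_integral_mono)
    fix x
    show "ennreal c * indicator {r/2..<r} x \<le> ennreal (indicator {0..<r} x * Qs 0 a x)"
    proof (cases "x \<in> {r/2..<r}")
      case True
      then have x: "0 \<le> x" "x \<le> 1" "r/2 \<le> x" using r by auto
      have "wgt a 0 * gfun (0+0) x \<le> Qs 0 a x"
        unfolding Qs_def
        using sum_le_suminf[OF wg_summable[of a 0 x], of "{0}"] wgt_nonneg gfun_nonneg by simp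
      moreover have "wgt a 0 * gfun (0+0) x = exp (-(a\<^sup>2)/2) * (x * exp (-(x\<^sup>2)/2))"
        using x by (simp add: wgt_def gfun_def)
      moreover have "c \<le> exp (-(a\<^sup>2)/2) * (x * exp (-(x\<^sup>2)/2))"
      proof -
        have "x\<^sup>2 \<le> 1" using x by (simp add: power_le_one)
        then have "exp (-1/2) \<le> exp (-(x\<^sup>2)/2)" by simp
        then have "(r/2) * exp (-1/2) \<le> x * exp (-(x\<^sup>2)/2)"
          using x by (intro mult_mono) auto
        then show ?thesis unfolding c_def by (simp add: mult_ac)
      qed
      ultimately have "c \<le> Qs 0 a x" by linarith
      then show ?thesis using True by (simp add: ennreal_leI)
    qed simp
  qed
  finally show ?thesis .
qed

lemma ncx2_cdf:
  assumes D: "ncx2_dist (2 * real (Suc m)) lam D" and t: "0 \<le> t"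
  shows "measure D {..t} = enn2real (\<integral>\<^sup>+x. ennreal (indicator {0..<sqrt t} x * Qs m (sqrt lam) x) \<partial>lborel)"
proof -
  have lam: "lam \<ge> 0" using D by (simp add: ncx2_dist_def)
  let ?Psi = "\<integral>\<^sup>+x. ennreal (indicator {0..<sqrt t} x * Qs m (sqrt lam) x) \<partial>lborel"
  let ?Phi = "\<integral>\<^sup>+x. ennreal (indicator {sqrt t..} x * Qs m (sqrt lam) x) \<partial>lborel"
  have s: "?Psi + ?Phi = 1" using Phi_split[of "sqrt t" m "sqrt lam"] t by simp
  have l1: "?Psi \<le> 1" unfolding s[symmetric] by (rule add_increasing2) auto
  have l2: "?Phi \<le> 1" unfolding s[symmetric] by (rule add_increasing) auto
  have t1: "?Psi < top" using l1 by (rule le_less_trans) simp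
  have t2: "?Phi < top" using l2 by (rule le_less_trans) simp
  have "ennreal (enn2real ?Psi + enn2real ?Phi) = ennreal (enn2real ?Psi) + ennreal (enn2real ?Phi)"
    by (rule ennreal_plus) auto
  also have "\<dots> = 1" unfolding ennreal_enn2real[OF t1] ennreal_enn2real[OF t2] by (rule s)
  finally have "enn2real ?Psi + enn2real ?Phi = 1" by (simp only: ennreal_eq_1)
  moreover have "measure D {..t} = 1 - marcumQ (real (Suc m)) (sqrt lam) (sqrt t)"
  proof -
    have e: "2 * real (Suc m) / 2 = real (Suc m)" by simp
    have "\<forall>g. measure D {..g} = (if g < 0 then 0 else 1 - marcumQ (real (Suc m)) (sqrt lam) (sqrt g))"
      using D unfolding ncx2_dist_def e by blast
    then show ?thesis using t by simp
  qed
  moreover have "marcumQ (real (Suc m)) (sqrt lam) (sqrt t) = enn2real ?Phi"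
    using t lam by (intro marcumQ_Phi) auto
  ultimately show ?thesis by simp
qed

lemma ncx2_upper:
  assumes D: "ncx2_dist (2 * real (Suc m)) lam D" and t: "0 \<le> t" "t \<le> 1"
  shows "measure D {..t} \<le> t^(Suc m)"
proof -
  have "measure D {..t} \<le> enn2real (ennreal (sqrt t^(2*m+2)))"
    unfolding ncx2_cdf[OF D t(1)] using t by (intro enn2real_mono Psi_upper) auto
  also have "\<dots> = t^(Suc m)"
  proof -
    have "sqrt t ^ (2*m+2) = (sqrt t ^ 2)^(Suc m)" unfolding power_mult[symmetric] by simp
    then show ?thesis using t by simp
  qed
  finally show ?thesis .
qed

lemma ncx2_lower:
  assumes D: "ncx2_dist 2 lam D"
  shows "\<exists>c>0. \<forall>t. 0 \<le> t \<longrightarrow> t \<le> 1 \<longrightarrow> c * t \<le> measure D {..t}"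
proof (intro exI conjI allI impI)
  have D': "ncx2_dist (2 * real (Suc 0)) lam D" using D by simp
  have lam: "lam \<ge> 0" using D by (simp add: ncx2_dist_def)
  show "exp (-lam/2) * exp (-1/2) / 4 > 0" by simp
  fix t :: real assume t: "0 \<le> t" "t \<le> 1"
  have "exp (-lam/2) * exp (-1/2) / 4 * t = enn2real (ennreal (exp (-((sqrt lam)\<^sup>2)/2) * exp (-1/2) * (sqrt t)^2 / 4))"
    using t lam by simp
  also have "\<dots> \<le> measure D {..t}"
    unfolding ncx2_cdf[OF D' t(1)]
  proof (rule enn2real_mono[OF Psi_lower])
    show "(\<integral>\<^sup>+x. ennreal (indicator {0..<sqrt t} x * Qs 0 (sqrt lam) x) \<partial>lborel) < top"
      using Psi_upper[of "sqrt t" 0 "sqrt lam"] t by (simp add: le_less_trans)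
  qed (use t in auto)
  finally show "exp (-lam/2) * exp (-1/2) / 4 * t \<le> measure D {..t}" .
qed


lemma dyadic_cover:
  fixes y :: real
  assumes "0 < y" "y \<le> 1"
  shows "\<exists>k. y \<le> (1/2)^k \<and> 1 / y \<le> 2^(k+1)"
proof -
  obtain n where n: "(1/2::real)^n < y" using real_arch_pow_inv[of y "1/2"] assms by auto
  define n0 where "n0 = (LEAST n. (1/2::real)^n < y)"
  have n0: "(1/2::real)^n0 < y" unfolding n0_def by (rule LeastI[of _ n]) (rule n)
  have "n0 \<noteq> 0"
  proof
    assume "n0 = 0" with n0 assms show False by simp
  qed
  then obtain k where k: "n0 = Suc k" by (cases n0) auto
  have kn: "k < n0" using k by simp
  have "\<not> (1/2::real)^k < y" using not_less_Least[of k "\<lambda>n. (1/2::real)^n < y"] kn unfolding n0_def by blast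
  then have yk: "y \<le> (1/2)^k" by simp
  have "1 / y \<le> 1 / (1/2)^(k+1)"
    using n0 k assms by (intro divide_left_mono) auto
  also have "\<dots> = 2^(k+1)" by (simp add: power_divide)
  finally show ?thesis using yk by blast
qed

lemma ennreal_term_le_suminf: "(f k :: ennreal) \<le> suminf f"
  using sum_le_suminf[OF summableI, of "{k}" f] by simp

lemma inv_moment_fin:
  assumes M: "prob_space M" and X[measurable]: "X \<in> borel_measurable M" and C: "C \<ge> 0"
    and F: "\<And>t. 0 \<le> t \<Longrightarrow> t \<le> 1 \<Longrightarrow> emeasure M {x\<in>space M. X x \<le> t} \<le> ennreal (C * t^2)"
  shows "(\<integral>\<^sup>+x. ennreal (1 / X x) \<partial>M) < \<infinity>"
proof -
  interpret prob_space M by (rule M)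
  let ?A = "\<lambda>n. {x\<in>space M. X x \<le> (1/2)^n}"
  have "(\<integral>\<^sup>+x. ennreal (1 / X x) \<partial>M) \<le> (\<integral>\<^sup>+x. 1 + (\<Sum>n. ennreal (2^(n+1)) * indicator (?A n) x) \<partial>M)"
  proof (rule nn_integral_mono)
    fix x assume x: "x \<in> space M"
    show "ennreal (1 / X x) \<le> 1 + (\<Sum>n. ennreal (2^(n+1)) * indicator (?A n) x)"
    proof (cases "X x \<le> 0")
      case True then have "1 / X x \<le> 0" by (simp add: divide_nonpos_nonneg)
      then show ?thesis by (simp add: ennreal_eq_0_iff[THEN iffD2])
    next
      case False
      show ?thesis
      proof (cases "X x \<le> 1")
        case True
        obtain k where k: "X x \<le> (1/2)^k" "1 / X x \<le> 2^(k+1)"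
          using dyadic_cover[of "X x"] False True by auto
        have "ennreal (1 / X x) \<le> ennreal (2^(k+1)) * indicator (?A k) x"
          using k x by (simp add: ennreal_leI)
        also have "\<dots> \<le> (\<Sum>n. ennreal (2^(n+1)) * indicator (?A n) x)"
          by (rule ennreal_term_le_suminf)
        also have "\<dots> \<le> 1 + (\<Sum>n. ennreal (2^(n+1)) * indicator (?A n) x)" by simp
        finally show ?thesis .
      next
        case False
        then have "1 / X x \<le> 1" by simp
        then have "ennreal (1 / X x) \<le> 1" by (simp add: ennreal_leI)
        then show ?thesis by (rule order_trans) simp
      qed
    qed
  qed
  also have "\<dots> = 1 + (\<Sum>n. ennreal (2^(n+1)) * emeasure M (?A n))"
    by (subst nn_integral_add) (auto simp: nn_integral_suminf nn_integral_cmult_indicator emeasure_space_1)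
  also have "\<dots> \<le> 1 + (\<Sum>n. ennreal (2 * C * (1/2)^n))"
  proof (intro add_left_mono suminf_le)
    fix n
    have "emeasure M (?A n) \<le> ennreal (C * ((1/2)^n)^2)" by (rule F) (auto simp: power_le_one)
    then have "ennreal (2^(n+1)) * emeasure M (?A n) \<le> ennreal (2^(n+1)) * ennreal (C * ((1/2)^n)^2)"
      by (rule mult_left_mono) simp
    also have "\<dots> = ennreal (2 * C * (1/2)^n)"
    proof -
      have h: "(2::real)^n * (1/2)^n = 1" by (simp add: power_mult_distrib[symmetric])
      have "(2::real)^(n+1) * (C * ((1/2)^n)^2) = 2 * C * (1/2)^n * (2^n * (1/2)^n)"
        by (simp add: power2_eq_square mult_ac)
      also have "\<dots> = 2 * C * (1/2)^n" by (simp only: h mult_1_right)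
      finally have e: "(2::real)^(n+1) * (C * ((1/2)^n)^2) = 2 * C * (1/2)^n" .
      have "ennreal (2^(n+1)) * ennreal (C * ((1/2)^n)^2) = ennreal (2^(n+1) * (C * ((1/2)^n)^2))"
        using C by (intro ennreal_mult[symmetric]) auto
      then show ?thesis by (simp only: e)
    qed
    finally show "ennreal (2^(n+1)) * emeasure M (?A n) \<le> ennreal (2 * C * (1/2)^n)" .
  qed auto
  also have "\<dots> < \<infinity>"
  proof -
    have "summable (\<lambda>n. 2 * C * (1/2::real)^n)" by (intro summable_mult summable_geometric) simp
    then have "(\<Sum>n. ennreal (2 * C * (1/2)^n)) \<noteq> top"
      using C by (intro ennreal_suminf_neq_top) auto
    then show ?thesis by (simp add: less_top)
  qed
  finally show ?thesis .
qed

lemma dyadic_sum_le: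
  fixes y :: real
  assumes "0 < y"
  shows "(\<Sum>m<N. 2^m * (if y \<le> (1/2)^m then 1 else 0)) \<le> 2 / y"
proof (induction N)
  case 0 then show ?case using assms by simp
next
  case (Suc N)
  show ?case
  proof (cases "y \<le> (1/2)^N")
    case True
    have all: "y \<le> (1/2)^m" if "m < Suc N" for m
    proof -
      have "(1/2::real)^N \<le> (1/2)^m" using that by (intro power_decreasing) auto
      then show ?thesis using True by linarith
    qed
    have "(\<Sum>m<Suc N. 2^m * (if y \<le> (1/2)^m then 1 else 0)) = (\<Sum>m<Suc N. (2::real)^m)"
      using all by (intro sum.cong) auto
    also have "\<dots> = 2^(Suc N) - 1"
      by (induction N) auto
    also have "\<dots> \<le> 2 * 2^N" by simp
    also have "\<dots> \<le> 2 / y"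
    proof -
      have "2^N * y \<le> 2^N * (1/2)^N" using True by simp
      also have "\<dots> = 1" by (simp add: power_divide)
      finally have "2^N \<le> 1 / y" using assms by (simp add: field_simps)
      then show ?thesis using assms by (simp add: field_simps)
    qed
    finally show ?thesis .
  next
    case False
    then show ?thesis using Suc by simp
  qed
qed

lemma inv_moment_inf:
  assumes M: "prob_space M" and X[measurable]: "X \<in> borel_measurable M" and pos: "AE x in M. X x > 0"
    and c: "c > 0"
    and F: "\<And>t. 0 \<le> t \<Longrightarrow> t \<le> 1 \<Longrightarrow> ennreal (c * t) \<le> emeasure M {x\<in>space M. X x \<le> t}"
  shows "(\<integral>\<^sup>+x. ennreal (1 / X x) \<partial>M) = \<infinity>"
proof (rule ccontr)
  interpret prob_space M by (rule M)
  let ?I = "\<integral>\<^sup>+x. ennreal (1 / X x) \<partial>M"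
  let ?A = "\<lambda>n. {x\<in>space M. X x \<le> (1/2)^n}"
  assume "?I \<noteq> \<infinity>"
  then have fin: "?I < top" by (simp add: less_top)
  have bnd: "ennreal (real N * c) \<le> 2 * ?I" for N
  proof -
    have "ennreal (real N * c) = (\<Sum>m<N. ennreal (2^m) * ennreal (c * (1/2)^m))"
    proof -
      have "(\<Sum>m<N. ennreal (2^m) * ennreal (c * (1/2)^m)) = (\<Sum>m<N. ennreal c)"
        using c by (intro sum.cong) (auto simp: ennreal_mult'[symmetric] power_divide)
      then show ?thesis using c by (simp add: ennreal_of_nat_eq_real_of_nat ennreal_mult' mult.commute)
    qed
    also have "\<dots> \<le> (\<Sum>m<N. ennreal (2^m) * emeasure M (?A m))"
      by (intro sum_mono mult_left_mono F) (auto simp: power_le_one)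
    also have "\<dots> = (\<integral>\<^sup>+x. (\<Sum>m<N. ennreal (2^m) * indicator (?A m) x) \<partial>M)"
      by (subst nn_integral_sum) (auto simp: nn_integral_cmult_indicator)
    also have "\<dots> \<le> (\<integral>\<^sup>+x. ennreal 2 * ennreal (1 / X x) \<partial>M)"
    proof (rule nn_integral_mono_AE)
      show "AE x in M. (\<Sum>m<N. ennreal (2^m) * indicator (?A m) x) \<le> ennreal 2 * ennreal (1 / X x)"
        using pos
      proof eventually_elim
        case (elim x)
        show ?case
        proof (cases "x \<in> space M")
          case True
          have "(\<Sum>m<N. ennreal (2^m) * indicator (?A m) x) = (\<Sum>m<N. ennreal (2^m * (if X x \<le> (1/2)^m then 1 else 0)))"
            using True by (intro sum.cong) (auto simp: indicator_def)
          also have "\<dots> = ennreal (\<Sum>m<N. 2^m * (if X x \<le> (1/2)^m then 1 else 0))"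
            by (rule sum_ennreal) simp
          also have "\<dots> \<le> ennreal (2 / X x)"
            using dyadic_sum_le[OF elim] by (rule ennreal_leI)
          also have "\<dots> = ennreal 2 * ennreal (1 / X x)"
          proof -
            have "2 / X x = 2 * (1 / X x)" by simp
            then show ?thesis by (simp only: ennreal_mult'[symmetric] order.refl zero_le_numeral)
          qed
          finally show ?thesis .
        qed (simp add: indicator_def)
      qed
    qed
    also have "\<dots> = 2 * ?I" by (subst nn_integral_cmult) auto
    finally show ?thesis .
  qed
  obtain r0 where r0: "?I = ennreal r0" "r0 \<ge> 0"
    using fin by (cases ?I) auto
  define r where "r = 2 * r0"
  have r: "2 * ?I = ennreal r" "r \<ge> 0" using r0 unfolding r_def by (auto simp: ennreal_mult')
  obtain N :: nat where N: "r / c < real N" using reals_Archimedean2 by blast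
  have "real N * c \<le> r" using bnd[of N] r c by (simp add: ennreal_le_iff)
  then show False using N c by (simp add: field_simps)
qed


lemma remaining_zero_step:
  "P k = 0 \<Longrightarrow> remaining B P g (Suc k) = remaining B P g k"
  by (simp add: Let_def split: prod.split)

lemma remaining_const:
  assumes "\<And>k. j \<le> k \<Longrightarrow> k < K \<Longrightarrow> P k = 0" "j \<le> K"
  shows "remaining B P g K = remaining B P g j"
  using assms(2,1)
proof (induction K rule: dec_induct)
  case (step K)
  then show ?case using remaining_zero_step[of P K B g] by simp
qed simp

lemma relay_decode:
  assumes B: "B > 0" and g0: "g 0 = (a0, b0, c0)" "a0 \<ge> 0" "b0 \<ge> 0" "max a0 b0 > 0"
    and g1: "g (Suc 0) = (a1, b1, c1)" "b1 \<ge> 0" "max b1 c1 > 0"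
    and P0: "P 0 = (exp B - 1) / max a0 b0" and P1: "P (Suc 0) = (exp B - 1) / max b1 c1"
  shows "snd (remaining B P g (Suc (Suc 0))) \<le> 0"
proof -
  have e: "exp B - 1 \<ge> 0" using B by simp
  have p0: "P 0 \<ge> 0" using P0 e g0 by simp
  have p1: "P (Suc 0) \<ge> 0" using P1 e g1 by simp
  have L0: "ln (1 + P 0 * max a0 b0) = B" using P0 g0 by simp
  have L1: "ln (1 + P (Suc 0) * max b1 c1) = B" using P1 g1 by simp
  have N0a: "ln (1 + P 0 * a0) \<ge> 0" using p0 g0 by simp
  have N0b: "ln (1 + P 0 * b0) \<ge> 0" using p0 g0 by simp
  have N1b: "ln (1 + P (Suc 0) * b1) \<ge> 0" using p1 g1 by simp
  show ?thesis
  proof (cases "a0 \<ge> b0")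
    case True
    then have "ln (1 + P 0 * a0) = B" using L0 by (simp add: max_def)
    then show ?thesis using g0 g1 N0b L1 B by (simp add: Let_def)
  next
    case False
    then have "ln (1 + P 0 * b0) = B" using L0 by (simp add: max_def)
    then show ?thesis using g0 g1 N1b L1 B by (simp add: Let_def)
  qed
qed


lemma pair3_emeasure:
  assumes "prob_space M0" "prob_space M1" "prob_space M2"
    and "A \<in> sets M0" "B \<in> sets M1" "C \<in> sets M2"
  shows "emeasure (M0 \<Otimes>\<^sub>M (M1 \<Otimes>\<^sub>M M2)) (A \<times> (B \<times> C)) = emeasure M0 A * (emeasure M1 B * emeasure M2 C)"
proof -
  interpret s2: sigma_finite_measure M2 using assms(3) by (rule prob_space_imp_sigma_finite)
  have p12: "prob_space (M1 \<Otimes>\<^sub>M M2)" using assms by (intro prob_space_pair)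
  interpret s12: sigma_finite_measure "M1 \<Otimes>\<^sub>M M2" using p12 by (rule prob_space_imp_sigma_finite)
  have "emeasure (M0 \<Otimes>\<^sub>M (M1 \<Otimes>\<^sub>M M2)) (A \<times> (B \<times> C)) = emeasure M0 A * emeasure (M1 \<Otimes>\<^sub>M M2) (B \<times> C)"
    using assms by (intro s12.emeasure_pair_measure_Times) auto
  also have "emeasure (M1 \<Otimes>\<^sub>M M2) (B \<times> C) = emeasure M1 B * emeasure M2 C"
    using assms by (intro s2.emeasure_pair_measure_Times) auto
  finally show ?thesis .
qed

lemma D_facts:
  assumes D: "prob_space D" "sets D = sets borel" and F: "\<And>t. 0 \<le> t \<Longrightarrow> t \<le> 1 \<Longrightarrow> measure D {..t} \<le> t"
  shows "space D = UNIV" "emeasure D {..0} = 0" "\<And>t. 0 \<le> t \<Longrightarrow> t \<le> 1 \<Longrightarrow> emeasure D {..t} \<le> ennreal t"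
proof -
  interpret prob_space D by (rule D(1))
  show sp: "space D = UNIV" using sets_eq_imp_space_eq[OF D(2)] by simp
  have m: "{..t} \<in> sets D" for t :: real using D(2) by simp
  show "emeasure D {..t} \<le> ennreal t" if "0 \<le> t" "t \<le> 1" for t
    using F[OF that] m by (simp add: emeasure_eq_measure ennreal_leI)
  from this[of 0] show "emeasure D {..0} = 0" by simp
qed

lemma AE_pos3:
  fixes D :: "real measure"
  assumes D: "prob_space D" "sets D = sets borel" and D0: "emeasure D {..0} = 0"
    and M0: "prob_space M0"
  shows "AE y in M0 \<Otimes>\<^sub>M (D \<Otimes>\<^sub>M D). fst (snd y) > 0 \<and> snd (snd y) > 0"
proof (rule AE_I')
  let ?S = "M0 \<Otimes>\<^sub>M (D \<Otimes>\<^sub>M D)"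
  have spD: "space D = UNIV" using sets_eq_imp_space_eq[OF D(2)] by simp
  have z: "{..0::real} \<in> sets D" using D(2) by simp
  have m1: "space M0 \<times> ({..0} \<times> space D) \<in> sets ?S"
    by (intro pair_measureI z sets.top)
  have m2: "space M0 \<times> (space D \<times> {..0}) \<in> sets ?S"
    by (intro pair_measureI z sets.top)
  have e1: "emeasure ?S (space M0 \<times> ({..0} \<times> space D)) = 0"
    using pair3_emeasure[OF M0 D(1) D(1) sets.top z sets.top] D0 by simp
  have e2: "emeasure ?S (space M0 \<times> (space D \<times> {..0})) = 0"
    using pair3_emeasure[OF M0 D(1) D(1) sets.top sets.top z] D0 by simp
  have n1: "space M0 \<times> ({..0} \<times> space D) \<in> null_sets ?S" by (rule null_setsI[OF e1 m1])
  have n2: "space M0 \<times> (space D \<times> {..0}) \<in> null_sets ?S" by (rule null_setsI[OF e2 m2])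
  show "(space M0 \<times> ({..0} \<times> space D)) \<union> (space M0 \<times> (space D \<times> {..0})) \<in> null_sets ?S"
    using n1 n2 by (rule null_sets.Un)
  show "{y \<in> space ?S. \<not> (fst (snd y) > 0 \<and> snd (snd y) > 0)} \<subseteq> (space M0 \<times> ({..0} \<times> space D)) \<union> (space M0 \<times> (space D \<times> {..0}))"
    unfolding space_pair_measure spD by (auto simp: not_less)
qed

lemma AE_pos1:
  fixes D :: "real measure"
  assumes D: "prob_space D" "sets D = sets borel" and D0: "emeasure D {..0} = 0"
    and M1: "prob_space M1"
  shows "AE y in D \<Otimes>\<^sub>M M1. fst y > 0"
proof (rule AE_I')
  let ?S = "D \<Otimes>\<^sub>M M1"
  interpret s1: sigma_finite_measure M1 using M1(1) by (rule prob_space_imp_sigma_finite)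
  have z: "{..0::real} \<in> sets D" using D(2) by simp
  have m: "{..0} \<times> space M1 \<in> sets ?S" by (intro pair_measureI z sets.top)
  have "emeasure ?S ({..0} \<times> space M1) = emeasure D {..0} * emeasure M1 (space M1)"
    by (intro s1.emeasure_pair_measure_Times z sets.top)
  then have e: "emeasure ?S ({..0} \<times> space M1) = 0" using D0 by simp
  show "{..0} \<times> space M1 \<in> null_sets ?S" by (rule null_setsI[OF e m])
  show "{y \<in> space ?S. \<not> fst y > 0} \<subseteq> {..0} \<times> space M1"
    by (auto simp: space_pair_measure not_less)
qed


lemma nn_integral_component_PiM:
  assumes "\<And>i. i \<in> I \<Longrightarrow> prob_space (M i)" "i \<in> I" "f \<in> borel_measurable (M i)"
  shows "(\<integral>\<^sup>+g. f (g i) \<partial>PiM I M) = (\<integral>\<^sup>+y. f y \<partial>M i)"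
proof -
  have dc: "distr (PiM I M) (M i) (\<lambda>g. g i) = M i"
    by (rule distr_PiM_component) (use assms in auto)
  have "(\<integral>\<^sup>+y. f y \<partial>M i) = (\<integral>\<^sup>+y. f y \<partial>distr (PiM I M) (M i) (\<lambda>g. g i))"
    using dc by simp
  also have "\<dots> = (\<integral>\<^sup>+g. f (g i) \<partial>PiM I M)"
    using assms by (intro nn_integral_distr) (auto simp: dc)
  finally show ?thesis ..
qed

lemma relay_finite:
  assumes D: "prob_space D" "sets D = sets borel"
    and F: "\<And>t. 0 \<le> t \<Longrightarrow> t \<le> 1 \<Longrightarrow> measure D {..t} \<le> t"
    and K: "K \<ge> 2" and R: "Reff > 0"
  shows "nmese K Reff (relay_slot D) < \<infinity>"
proof -
  interpret D: prob_space D by (rule D(1))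
  note [measurable_cong] = D(2)
  have spD: "space D = UNIV" and D0: "emeasure D {..0} = 0"
    and Dt: "\<And>t. 0 \<le> t \<Longrightarrow> t \<le> 1 \<Longrightarrow> emeasure D {..t} \<le> ennreal t"
    using D_facts[OF D F] by auto
  define S where "S = relay_slot D"
  have S_def': "S = D \<Otimes>\<^sub>M (D \<Otimes>\<^sub>M D)" by (simp add: S_def relay_slot_def)
  have pDD: "prob_space (D \<Otimes>\<^sub>M D)" using D by (intro prob_space_pair)
  have pS: "prob_space S" unfolding S_def' using D pDD by (intro prob_space_pair)
  interpret S: prob_space S by (rule pS)
  have spS: "space S = UNIV" unfolding S_def' by (simp add: space_pair_measure spD)
  define B where "B = real K * Reff"
  have B: "B > 0" using K R by (simp add: B_def)
  have eB: "exp B - 1 > 0" using B by simp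
  define X0 where "X0 y = max (fst y) (fst (snd y))" for y :: snr
  define X1 where "X1 y = max (fst (snd y)) (snd (snd y))" for y :: snr
  define f0 where "f0 y = (if X0 y > 0 then (exp B - 1) / X0 y else 0)" for y
  define f1 where "f1 y = (if X1 y > 0 then (exp B - 1) / X1 y else 0)" for y
  have X0m[measurable]: "X0 \<in> borel_measurable S" unfolding X0_def[abs_def] S_def' by measurable
  have X1m[measurable]: "X1 \<in> borel_measurable S" unfolding X1_def[abs_def] S_def' by measurable
  have f0m[measurable]: "f0 \<in> borel_measurable S" unfolding f0_def[abs_def] by measurable
  have f1m[measurable]: "f1 \<in> borel_measurable S" unfolding f1_def[abs_def] by measurable
  have f0n: "f0 y \<ge> 0" for y using eB by (simp add: f0_def)
  have f1n: "f1 y \<ge> 0" for y using eB by (simp add: f1_def)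
  define p where "p k g = (if k = 0 then f0 (g 0) else 0) + (if k = Suc 0 then f1 (g (Suc 0)) else 0)"
    for k and g :: "nat \<Rightarrow> snr"
  have cdf0: "emeasure S {y\<in>space S. X0 y \<le> t} \<le> ennreal (1 * t^2)" if "0 \<le> t" "t \<le> 1" for t
  proof -
    have "{y\<in>space S. X0 y \<le> t} = {..t} \<times> ({..t} \<times> UNIV)"
      by (auto simp: spS X0_def)
    then have "emeasure S {y\<in>space S. X0 y \<le> t} = emeasure D {..t} * (emeasure D {..t} * emeasure D UNIV)"
      unfolding S_def' using pair3_emeasure[OF D(1) D(1) D(1), of "{..t}" "{..t}" UNIV] D(2) spD by simp
    also have "\<dots> \<le> ennreal t * (ennreal t * 1)"
      using Dt[OF that] D.emeasure_space_1 spD by (intro mult_mono) auto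
    also have "\<dots> = ennreal (1 * t^2)" using that by (simp add: ennreal_mult' power2_eq_square)
    finally show ?thesis .
  qed
  have cdf1: "emeasure S {y\<in>space S. X1 y \<le> t} \<le> ennreal (1 * t^2)" if "0 \<le> t" "t \<le> 1" for t
  proof -
    have "{y\<in>space S. X1 y \<le> t} = UNIV \<times> ({..t} \<times> {..t})"
      by (auto simp: spS X1_def)
    then have "emeasure S {y\<in>space S. X1 y \<le> t} = emeasure D UNIV * (emeasure D {..t} * emeasure D {..t})"
      unfolding S_def' using pair3_emeasure[OF D(1) D(1) D(1), of UNIV "{..t}" "{..t}"] D(2) spD by simp
    also have "\<dots> \<le> 1 * (ennreal t * ennreal t)"
      using Dt[OF that] D.emeasure_space_1 spD by (intro mult_mono) auto
    also have "\<dots> = ennreal (1 * t^2)" using that by (simp add: ennreal_mult' power2_eq_square)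
    finally show ?thesis .
  qed
  have I0: "(\<integral>\<^sup>+y. ennreal (1 / X0 y) \<partial>S) < \<infinity>"
    by (rule inv_moment_fin[OF pS X0m _ cdf0]) auto
  have I1: "(\<integral>\<^sup>+y. ennreal (1 / X1 y) \<partial>S) < \<infinity>"
    by (rule inv_moment_fin[OF pS X1m _ cdf1]) auto
  have fX: "ennreal (f y) = ennreal (exp B - 1) * ennreal (1 / X y)"
    if "f y = (if X y > 0 then (exp B - 1) / X y else 0)" for f X and y :: snr
  proof (cases "X y > 0")
    case True then show ?thesis using that eB by (simp add: ennreal_mult'[symmetric] divide_inverse)
  next
    case False
    then have "1 / X y \<le> 0" by (simp add: divide_nonpos_nonneg)
    then show ?thesis using that False by (simp add: ennreal_eq_0_iff[THEN iffD2])
  qed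
  have E0: "(\<integral>\<^sup>+y. ennreal (f0 y) \<partial>S) < \<infinity>"
  proof -
    have "(\<integral>\<^sup>+y. ennreal (f0 y) \<partial>S) = ennreal (exp B - 1) * (\<integral>\<^sup>+y. ennreal (1 / X0 y) \<partial>S)"
      by (subst nn_integral_cmult[symmetric]) (auto intro!: nn_integral_cong fX simp: f0_def)
    then show ?thesis using I0 by (simp add: ennreal_mult_less_top)
  qed
  have E1: "(\<integral>\<^sup>+y. ennreal (f1 y) \<partial>S) < \<infinity>"
  proof -
    have "(\<integral>\<^sup>+y. ennreal (f1 y) \<partial>S) = ennreal (exp B - 1) * (\<integral>\<^sup>+y. ennreal (1 / X1 y) \<partial>S)"
      by (subst nn_integral_cmult[symmetric]) (auto intro!: nn_integral_cong fX simp: f1_def)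
    then show ?thesis using I1 by (simp add: ennreal_mult_less_top)
  qed
  let ?P = "PiM {1..<K} (\<lambda>_. S)"
  have pP: "prob_space ?P" using pS by (intro prob_space_PiM) auto
  interpret P: prob_space ?P by (rule pP)
  have AEpos: "AE y in S. fst (snd y) > 0 \<and> snd (snd y) > 0"
    unfolding S_def' using AE_pos3[OF D D0 D(1)] .
  have AEpos1: "AE y in S. fst y > 0"
    unfolding S_def' using AE_pos1[OF D D0 pDD] .
  have Jbound: "Jstar K B S g1 \<le> ennreal (f0 g1) + (\<integral>\<^sup>+y. ennreal (f1 y) \<partial>S)"
    if g1: "fst g1 > 0" "fst (snd g1) > 0" for g1
  proof -
    obtain a0 b0 c0 where g1e: "g1 = (a0, b0, c0)" by (cases g1) auto
    have adm: "admissible K B S g1 p"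
      unfolding admissible_def
    proof (intro conjI allI impI)
      show "0 \<le> p k g" for k g using f0n f1n by (simp add: p_def)
      show "causal_policy p"
        unfolding causal_policy_def p_def by auto
      show "p k \<in> borel_measurable (PiM {..<K} (\<lambda>_. S))" if "k < K" for k
      proof -
        have "(\<lambda>g. f0 (g 0)) \<in> borel_measurable (PiM {..<K} (\<lambda>_. S))"
          using K by (intro measurable_compose[OF measurable_component_singleton[where M="\<lambda>_. S" and I="{..<K}" and i=0] f0m]) auto
        moreover have "(\<lambda>g. f1 (g (Suc 0))) \<in> borel_measurable (PiM {..<K} (\<lambda>_. S))"
          using K by (intro measurable_compose[OF measurable_component_singleton[where M="\<lambda>_. S" and I="{..<K}" and i="Suc 0"] f1m]) auto
        ultimately show ?thesis unfolding p_def[abs_def] by measurable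
      qed
      have "AE g in ?P. fst (snd (g (Suc 0))) > 0 \<and> snd (snd (g (Suc 0))) > 0"
        by (rule AE_PiM_component[where M="\<lambda>_. S" and I="{1..<K}" and i="Suc 0" and P="\<lambda>y. fst (snd y) > 0 \<and> snd (snd y) > 0"]) (use K pS AEpos in auto)
      then show "AE g in ?P. snd (remaining B (\<lambda>k. p k (g(0 := g1))) (g(0 := g1)) K) \<le> 0"
      proof eventually_elim
        case (elim g)
        define G where "G = g(0 := g1)"
        obtain a1 b1 c1 where g1e': "g (Suc 0) = (a1, b1, c1)" by (cases "g (Suc 0)") auto
        have "remaining B (\<lambda>k. p k G) G K = remaining B (\<lambda>k. p k G) G (Suc (Suc 0))"
          using K by (intro remaining_const) (auto simp: p_def)
        moreover have "snd (remaining B (\<lambda>k. p k G) G (Suc (Suc 0))) \<le> 0"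
        proof (rule relay_decode[OF B])
          show "G 0 = (a0, b0, c0)" by (simp add: G_def g1e)
          show "G (Suc 0) = (a1, b1, c1)" by (simp add: G_def g1e')
        qed (use g1 g1e elim g1e' in \<open>auto simp: p_def G_def f0_def f1_def X0_def X1_def\<close>)
        ultimately show ?case by (simp add: G_def)
      qed
    qed
    have cost: "(\<Sum>k<K. p k (g(0 := g1))) = f0 g1 + f1 (g (Suc 0))" for g
      using K by (simp add: p_def sum.distrib)
    have "Jstar K B S g1 \<le> (\<integral>\<^sup>+g. ennreal (\<Sum>k<K. p k (g(0 := g1))) \<partial>?P)"
      unfolding Jstar_def using adm by (intro INF_lower) simp
    also have "\<dots> = (\<integral>\<^sup>+g. ennreal (f0 g1) + ennreal (f1 (g (Suc 0))) \<partial>?P)"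
      by (intro nn_integral_cong) (simp add: cost f0n f1n)
    also have "\<dots> = (\<integral>\<^sup>+g. ennreal (f0 g1) \<partial>?P) + (\<integral>\<^sup>+g. ennreal (f1 (g (Suc 0))) \<partial>?P)"
    proof (rule nn_integral_add)
      show "(\<lambda>g. ennreal (f1 (g (Suc 0)))) \<in> borel_measurable ?P"
        using K by (intro measurable_compose[OF measurable_component_singleton[where M="\<lambda>_. S" and I="{1..<K}" and i="Suc 0"]]) auto
    qed simp
    also have "(\<integral>\<^sup>+g. ennreal (f0 g1) \<partial>?P) = ennreal (f0 g1)"
      using P.emeasure_space_1 by (simp only: nn_integral_const mult_1_right)
    also have "(\<integral>\<^sup>+g. ennreal (f1 (g (Suc 0))) \<partial>?P) = (\<integral>\<^sup>+y. ennreal (f1 y) \<partial>S)"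
      using K pS by (intro nn_integral_component_PiM) auto
    finally show ?thesis .
  qed
  have "(\<integral>\<^sup>+g1. Jstar K B S g1 \<partial>S) \<le> (\<integral>\<^sup>+g1. ennreal (f0 g1) + (\<integral>\<^sup>+y. ennreal (f1 y) \<partial>S) \<partial>S)"
    using AEpos AEpos1 by (intro nn_integral_mono_AE) (auto intro: Jbound)
  also have "\<dots> = (\<integral>\<^sup>+g1. ennreal (f0 g1) \<partial>S) + (\<integral>\<^sup>+y. ennreal (f1 y) \<partial>S)"
    by (subst nn_integral_add) (auto simp: S.emeasure_space_1)
  also have "\<dots> < \<infinity>" using E0 E1 by simp
  finally have "(\<integral>\<^sup>+g1. Jstar K B S g1 \<partial>S) < \<infinity>" .
  then show ?thesis
    unfolding nmese_def S_def[symmetric] B_def[symmetric] by (simp add: ennreal_mult_less_top)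
qed


lemma norelay_lb:
  fixes M :: "'a measure" and gam :: "'a \<Rightarrow> real" and q :: "nat \<Rightarrow> (nat \<Rightarrow> 'a) \<Rightarrow> real"
  assumes M: "prob_space M" and gm[measurable]: "gam \<in> borel_measurable M"
    and gpos: "AE y in M. gam y > 0" and ginf: "(\<integral>\<^sup>+y. ennreal (1 / gam y) \<partial>M) = \<infinity>"
    and b: "b > 0" and g0: "gam0 > 0"
    and qc: "\<And>k g g'. (\<And>j. 1 \<le> j \<Longrightarrow> j \<le> k \<Longrightarrow> g j = g' j) \<Longrightarrow> q k g = q k g'"
    and n: "1 \<le> n"
  shows "(\<And>k g. k < n \<Longrightarrow> q k g \<ge> 0) \<Longrightarrow>
    (\<And>k. k < n \<Longrightarrow> q k \<in> borel_measurable (PiM {1..<n} (\<lambda>_. M))) \<Longrightarrow>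
    (AE g in PiM {1..<n} (\<lambda>_. M). b \<le> (\<Sum>k<n. ln (1 + q k g * (if k = 0 then gam0 else gam (g k))))) \<Longrightarrow>
    ennreal ((exp b - 1) / gam0) \<le> (\<integral>\<^sup>+g. ennreal (\<Sum>k<n. q k g) \<partial>PiM {1..<n} (\<lambda>_. M))"
  using n
proof (induction n rule: nat_induct_at_least)
  case base
  let ?u = "(\<lambda>_. undefined) :: nat \<Rightarrow> 'a"
  have PE: "PiM {1..<1} (\<lambda>_. M) = count_space {?u}" by (simp add: PiM_empty)
  from base(3) have "b \<le> ln (1 + q 0 ?u * gam0)" unfolding PE by (simp add: AE_count_space)
  moreover have q0: "q 0 ?u \<ge> 0" using base(1)[of 0] by simp
  ultimately have "exp b \<le> 1 + q 0 ?u * gam0"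
    using g0 by (subst (asm) ln_ge_iff) (auto intro: add_pos_nonneg)
  then have "(exp b - 1) / gam0 \<le> q 0 ?u" using g0 by (simp add: pos_divide_le_eq)
  then show ?case unfolding PE by (simp add: nn_integral_count_space_finite ennreal_leI)
next
  case (Suc n)
  interpret M: prob_space M by (rule M)
  interpret PSF: product_sigma_finite "\<lambda>_. M"
    by unfold_locales
  define I where "I = {1..<n}"
  have J: "{1..<Suc n} = insert n I" using Suc.hyps by (auto simp: I_def)
  have nI: "n \<notin> I" "finite I" by (auto simp: I_def)
  let ?PI = "PiM I (\<lambda>_. M)"
  let ?PJ = "PiM (insert n I) (\<lambda>_. M)"
  define Gam where "Gam k g = (if k = 0 then gam0 else gam (g k))" for k and g :: "nat \<Rightarrow> 'a"
  have qm: "q k \<in> borel_measurable ?PJ" if "k < Suc n" for k using Suc.prems(2)[OF that] unfolding J .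
  have Gm: "(\<lambda>g. Gam k g) \<in> borel_measurable ?PJ" if "k < Suc n" for k
  proof (cases "k = 0")
    case False
    then have "k \<in> insert n I" using that by (auto simp: I_def)
    then show ?thesis using False unfolding Gam_def
      by (simp add: measurable_compose[OF measurable_component_singleton[where M="\<lambda>_. M" and I="insert n I" and i=k] gm])
  qed (simp add: Gam_def)
  have Fm: "(\<lambda>g. \<Sum>k<Suc n. ln (1 + q k g * Gam k g)) \<in> borel_measurable ?PJ"
  proof (rule borel_measurable_sum)
    fix k assume "k \<in> {..<Suc n}"
    then have [measurable]: "q k \<in> borel_measurable ?PJ" "(\<lambda>g. Gam k g) \<in> borel_measurable ?PJ"
      using qm Gm by auto
    show "(\<lambda>g. ln (1 + q k g * Gam k g)) \<in> borel_measurable ?PJ" by measurable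
  qed
  define N where "N = {g \<in> space ?PJ. \<not> b \<le> (\<Sum>k<Suc n. ln (1 + q k g * Gam k g))}"
  have Nm: "N \<in> sets ?PJ" unfolding N_def using Fm by measurable
  have AEN: "AE g in ?PJ. g \<notin> N"
    using Suc.prems(3) unfolding J N_def Gam_def by eventually_elim auto
  define h where "h g = ennreal (\<Sum>k<Suc n. q k g) + (if g \<in> N then \<infinity> else 0)" for g
  have hm: "h \<in> borel_measurable ?PJ"
  proof -
    have "(\<lambda>g. \<Sum>k<Suc n. q k g) \<in> borel_measurable ?PJ"
      using qm by (intro borel_measurable_sum) auto
    then show ?thesis unfolding h_def using Nm by measurable
  qed
  have "(\<integral>\<^sup>+g. ennreal (\<Sum>k<Suc n. q k g) \<partial>?PJ) = (\<integral>\<^sup>+g. h g \<partial>?PJ)"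
    using AEN by (intro nn_integral_cong_AE) (auto simp: h_def)
  also have "\<dots> = (\<integral>\<^sup>+x. (\<integral>\<^sup>+y. h (x(n := y)) \<partial>M) \<partial>?PI)"
    by (rule PSF.product_nn_integral_insert[OF nI(2) nI(1) hm])
  finally have split: "(\<integral>\<^sup>+g. ennreal (\<Sum>k<Suc n. q k g) \<partial>?PJ) = (\<integral>\<^sup>+x. (\<integral>\<^sup>+y. h (x(n := y)) \<partial>M) \<partial>?PI)" .
  define r where "r x = b - (\<Sum>k<n. ln (1 + q k x * Gam k x))" for x
  define S0 where "S0 x = (\<Sum>k<n. q k x)" for x
  have qupd: "q k (x(n := y)) = q k x" if "k < n" for k x y
    using that by (intro qc) auto
  have Gupd: "Gam k (x(n := y)) = Gam k x" if "k < n" for k x y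
    using that by (simp add: Gam_def)
  have inner: "(if r x > 0 then \<infinity> else ennreal (S0 x)) \<le> (\<integral>\<^sup>+y. h (x(n := y)) \<partial>M)"
    if x: "x \<in> space ?PI" for x
  proof (cases "r x > 0")
    case False
    have "ennreal (S0 x) = (\<integral>\<^sup>+y. ennreal (S0 x) \<partial>M)" by (simp add: M.emeasure_space_1)
    also have "\<dots> \<le> (\<integral>\<^sup>+y. h (x(n := y)) \<partial>M)"
    proof (rule nn_integral_mono)
      fix y
      have s1: "(\<Sum>k<n. q k (x(n := y))) = (\<Sum>k<n. q k x)"
        by (rule sum.cong) (auto simp: qupd)
      have q1: "q n (x(n := y)) \<ge> 0" by (rule Suc.prems(1)) simp
      have "S0 x \<le> (\<Sum>k<Suc n. q k (x(n := y)))"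
        unfolding sum.lessThan_Suc s1 S0_def using q1 by simp
      then show "ennreal (S0 x) \<le> h (x(n := y))"
        unfolding h_def by (rule order_trans[OF ennreal_leI]) simp
    qed
    finally show ?thesis using False by simp
  next
    case True
    have "(\<integral>\<^sup>+y. ennreal (exp (r x) - 1) * ennreal (1 / gam y) \<partial>M) \<le> (\<integral>\<^sup>+y. h (x(n := y)) \<partial>M)"
    proof (rule nn_integral_mono_AE)
      show "AE y in M. ennreal (exp (r x) - 1) * ennreal (1 / gam y) \<le> h (x(n := y))"
        using gpos AE_space
      proof eventually_elim
        case (elim y)
        show ?case
        proof (cases "x(n := y) \<in> N")
          case True then show ?thesis by (simp add: h_def)
        next
          case notN: False
          have "x(n := y) \<in> space ?PJ"
            using x elim(2) by (auto simp: space_PiM intro!: PiE_fun_upd)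
          with notN have c: "b \<le> (\<Sum>k<Suc n. ln (1 + q k (x(n := y)) * Gam k (x(n := y))))"
            by (simp add: N_def)
          have Gn: "Gam n (x(n := y)) = gam y" using Suc.hyps by (simp add: Gam_def)
          have "b \<le> (\<Sum>k<n. ln (1 + q k x * Gam k x)) + ln (1 + q n (x(n := y)) * gam y)"
            using c by (simp add: qupd Gupd Gn)
          then have rl: "r x \<le> ln (1 + q n (x(n := y)) * gam y)" by (simp add: r_def)
          have qn0: "q n (x(n := y)) \<ge> 0" by (rule Suc.prems(1)) simp
          have "exp (r x) \<le> 1 + q n (x(n := y)) * gam y"
            using rl elim qn0 by (subst (asm) ln_ge_iff) (auto intro: add_pos_nonneg)
          then have "(exp (r x) - 1) * (1 / gam y) \<le> q n (x(n := y))"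
            using elim by (simp add: pos_divide_le_eq)
          moreover have "q n (x(n := y)) \<le> (\<Sum>k<Suc n. q k (x(n := y)))"
            using Suc.prems(1) by (intro member_le_sum) auto
          ultimately have "(exp (r x) - 1) * (1 / gam y) \<le> (\<Sum>k<Suc n. q k (x(n := y)))" by linarith
          then have "ennreal ((exp (r x) - 1) * (1 / gam y)) \<le> h (x(n := y))"
            unfolding h_def using notN by (simp add: ennreal_leI)
          moreover have "ennreal ((exp (r x) - 1) * (1 / gam y)) = ennreal (exp (r x) - 1) * ennreal (1 / gam y)"
            using True elim by (intro ennreal_mult) auto
          ultimately show ?thesis by simp
        qed
      qed
    qed
    moreover have "(\<integral>\<^sup>+y. ennreal (exp (r x) - 1) * ennreal (1 / gam y) \<partial>M) = \<infinity>"
      using True ginf by (subst nn_integral_cmult) auto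
    ultimately show ?thesis using True by simp
  qed
  have L: "(\<integral>\<^sup>+x. (if r x > 0 then \<infinity> else ennreal (S0 x)) \<partial>?PI) \<le> (\<integral>\<^sup>+g. ennreal (\<Sum>k<Suc n. q k g) \<partial>?PJ)"
    unfolding split by (intro nn_integral_mono inner)
  obtain y0 where y0: "y0 \<in> space M" using M.not_empty by auto
  have upd_m: "(\<lambda>x. x(n := y0)) \<in> measurable ?PI ?PJ"
    using y0 by (intro measurable_fun_upd[where J=I]) auto
  have qmI: "q k \<in> borel_measurable ?PI" if "k < n" for k
  proof -
    have "(\<lambda>x. q k (x(n := y0))) \<in> borel_measurable ?PI"
      using qm[of k] that by (intro measurable_compose[OF upd_m]) auto
    moreover have "q k (x(n := y0)) = q k x" for x using qupd[OF that] .
    ultimately show ?thesis by simp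
  qed
  have GmI: "(\<lambda>x. Gam k x) \<in> borel_measurable ?PI" if "k < n" for k
  proof (cases "k = 0")
    case False
    then have "k \<in> I" using that by (auto simp: I_def)
    then show ?thesis using False unfolding Gam_def
      by (simp add: measurable_compose[OF measurable_component_singleton[where M="\<lambda>_. M" and I=I and i=k] gm])
  qed (simp add: Gam_def)
  have rm: "r \<in> borel_measurable ?PI"
  proof -
    have "(\<lambda>x. \<Sum>k<n. ln (1 + q k x * Gam k x)) \<in> borel_measurable ?PI"
    proof (rule borel_measurable_sum)
      fix k assume "k \<in> {..<n}"
      then have [measurable]: "q k \<in> borel_measurable ?PI" "(\<lambda>g. Gam k g) \<in> borel_measurable ?PI"
        using qmI GmI by auto
      show "(\<lambda>g. ln (1 + q k g * Gam k g)) \<in> borel_measurable ?PI" by measurable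
    qed
    then show ?thesis unfolding r_def[abs_def] by measurable
  qed
  define A where "A = {x \<in> space ?PI. r x > 0}"
  have Am: "A \<in> sets ?PI" unfolding A_def using rm by measurable
  show ?case
  proof (cases "emeasure ?PI A = 0")
    case False
    have "\<infinity> = (\<integral>\<^sup>+x. \<infinity> * indicator A x \<partial>?PI)"
      using False Am by (simp add: nn_integral_cmult_indicator)
    also have "\<dots> \<le> (\<integral>\<^sup>+x. (if r x > 0 then \<infinity> else ennreal (S0 x)) \<partial>?PI)"
      by (intro nn_integral_mono) (auto simp: A_def indicator_def)
    also note L
    finally show ?thesis unfolding J by (simp add: top_unique)
  next
    case True
    have AEr: "AE x in ?PI. \<not> r x > 0"
    proof -
      have "AE x in ?PI. x \<notin> A" using True Am by (intro AE_not_in) (simp add: null_sets_def)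
      then show ?thesis using AE_space by eventually_elim (auto simp: A_def)
    qed
    have "ennreal ((exp b - 1) / gam0) \<le> (\<integral>\<^sup>+x. ennreal (\<Sum>k<n. q k x) \<partial>PiM {1..<n} (\<lambda>_. M))"
    proof (rule Suc.IH)
      show "q k g \<ge> 0" if "k < n" for k g using Suc.prems(1) that by simp
      show "q k \<in> borel_measurable (PiM {1..<n} (\<lambda>_. M))" if "k < n" for k
        using qmI[OF that] by (simp add: I_def)
      show "AE g in PiM {1..<n} (\<lambda>_. M). b \<le> (\<Sum>k<n. ln (1 + q k g * (if k = 0 then gam0 else gam (g k))))"
        using AEr unfolding I_def[symmetric] by eventually_elim (simp add: r_def Gam_def)
    qed
    also have "\<dots> \<le> (\<integral>\<^sup>+x. (if r x > 0 then \<infinity> else ennreal (S0 x)) \<partial>?PI)"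
      unfolding I_def[symmetric] by (intro nn_integral_mono) (auto simp: S0_def)
    also note L
    finally show ?thesis unfolding J .
  qed
qed


lemma remaining_norelay:
  assumes "\<And>k. k < m \<Longrightarrow> fst (g k) = 0" "B > 0"
  shows "remaining B P g m = (B, B - (\<Sum>k<m. ln (1 + P k * fst (snd (g k)))))"
  using assms(1)
proof (induction m)
  case (Suc m)
  then have IH: "remaining B P g m = (B, B - (\<Sum>k<m. ln (1 + P k * fst (snd (g k)))))" by simp
  obtain a c d where gm: "g m = (a, c, d)" by (cases "g m") auto
  have "a = 0" using Suc.prems[of m] gm by simp
  then show ?case using IH gm assms(2) by (simp add: Let_def)
qed simp

lemma AE_fst_return:
  assumes M1: "prob_space M1"
  shows "AE y in return borel (0::real) \<Otimes>\<^sub>M M1. fst y = 0"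
proof (rule AE_I')
  let ?S = "return borel (0::real) \<Otimes>\<^sub>M M1"
  interpret s1: sigma_finite_measure M1 using M1 by (rule prob_space_imp_sigma_finite)
  have z: "UNIV - {0::real} \<in> sets (return borel 0)" by simp
  have m: "(UNIV - {0::real}) \<times> space M1 \<in> sets ?S" by (intro pair_measureI z sets.top)
  have "emeasure ?S ((UNIV - {0}) \<times> space M1) = emeasure (return borel 0) (UNIV - {0::real}) * emeasure M1 (space M1)"
    by (intro s1.emeasure_pair_measure_Times z sets.top)
  then have e: "emeasure ?S ((UNIV - {0}) \<times> space M1) = 0" by simp
  show "(UNIV - {0}) \<times> space M1 \<in> null_sets ?S" by (rule null_setsI[OF e m])
  show "{y \<in> space ?S. \<not> fst y = 0} \<subseteq> (UNIV - {0}) \<times> space M1"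
    by (auto simp: space_pair_measure)
qed

lemma norelay_common:
  fixes D :: "real measure"
  assumes D: "prob_space D" "sets D = sets borel" and D0: "emeasure D {..0} = 0"
  shows "prob_space (no_relay_slot D)" "space (no_relay_slot D) = UNIV"
    "AE y in no_relay_slot D. fst (snd y) > 0" "AE y in no_relay_slot D. fst y = 0"
    "\<And>t. emeasure (no_relay_slot D) {y \<in> space (no_relay_slot D). fst (snd y) \<le> t} = emeasure D {..t}"
proof -
  interpret D: prob_space D by (rule D(1))
  have spD: "space D = UNIV" using sets_eq_imp_space_eq[OF D(2)] by simp
  have pR: "prob_space (return borel (0::real))" by (intro prob_space_return) simp
  have pDD: "prob_space (D \<Otimes>\<^sub>M D)" using D by (intro prob_space_pair)
  show "prob_space (no_relay_slot D)" unfolding no_relay_slot_def using pR pDD D(1) by (intro prob_space_pair)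
  show sp: "space (no_relay_slot D) = UNIV" unfolding no_relay_slot_def by (simp add: space_pair_measure spD)
  show "AE y in no_relay_slot D. fst (snd y) > 0"
    unfolding no_relay_slot_def using AE_pos3[OF D D0 pR] by eventually_elim simp
  show "AE y in no_relay_slot D. fst y = 0"
    unfolding no_relay_slot_def using AE_fst_return[OF pDD] .
  fix t :: real
  have "{y \<in> space (no_relay_slot D). fst (snd y) \<le> t} = UNIV \<times> ({..t} \<times> UNIV)"
    by (auto simp: sp)
  moreover have "emeasure (return borel (0::real) \<Otimes>\<^sub>M (D \<Otimes>\<^sub>M D)) (UNIV \<times> ({..t} \<times> UNIV)) = emeasure (return borel (0::real)) UNIV * (emeasure D {..t} * emeasure D UNIV)"
    using pair3_emeasure[OF pR D(1) D(1), of UNIV "{..t}" UNIV] D(2) spD by simp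
  ultimately show "emeasure (no_relay_slot D) {y \<in> space (no_relay_slot D). fst (snd y) \<le> t} = emeasure D {..t}"
    using D.emeasure_space_1 spD by (simp add: no_relay_slot_def)
qed

lemma norelay_finite:
  fixes D :: "real measure"
  assumes D: "prob_space D" "sets D = sets borel"
    and F: "\<And>t. 0 \<le> t \<Longrightarrow> t \<le> 1 \<Longrightarrow> measure D {..t} \<le> t^2"
    and K: "K \<ge> 1" and R: "Reff > 0"
  shows "nmese K Reff (no_relay_slot D) < \<infinity>"
proof -
  interpret D: prob_space D by (rule D(1))
  have Dt: "emeasure D {..t} \<le> ennreal (1 * t^2)" if "0 \<le> t" "t \<le> 1" for t
    using F[OF that] D(2) by (simp add: D.emeasure_eq_measure ennreal_leI)
  have D0: "emeasure D {..0} = 0" using Dt[of 0] by simp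
  define S where "S = no_relay_slot D"
  note SC = norelay_common[OF D D0, folded S_def]
  have pS: "prob_space S" by (rule SC(1))
  interpret S: prob_space S by (rule pS)
  have [measurable_cong]: "sets S = sets (return borel 0 \<Otimes>\<^sub>M (D \<Otimes>\<^sub>M D))" by (simp only: S_def no_relay_slot_def)
  note [measurable_cong] = D(2)
  define B where "B = real K * Reff"
  have B: "B > 0" using K R by (simp add: B_def)
  have eB: "exp B - 1 > 0" using B by simp
  define X where "X y = fst (snd y)" for y :: snr
  define f where "f y = (if X y > 0 then (exp B - 1) / X y else 0)" for y
  have Xm[measurable]: "X \<in> borel_measurable S" unfolding X_def[abs_def] by measurable
  have fm[measurable]: "f \<in> borel_measurable S" unfolding f_def[abs_def] by measurable
  have fn: "f y \<ge> 0" for y using eB by (simp add: f_def)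
  define p where "p k g = (if k = 0 then f (g 0) else 0)" for k :: nat and g :: "nat \<Rightarrow> snr"
  have I: "(\<integral>\<^sup>+y. ennreal (1 / X y) \<partial>S) < \<infinity>"
    by (rule inv_moment_fin[OF pS Xm, of 1]) (use SC(5) Dt in \<open>auto simp: X_def\<close>)
  have E: "(\<integral>\<^sup>+y. ennreal (f y) \<partial>S) < \<infinity>"
  proof -
    have fX: "ennreal (f y) = ennreal (exp B - 1) * ennreal (1 / X y)" for y
    proof (cases "X y > 0")
      case True then show ?thesis using eB by (simp add: f_def ennreal_mult'[symmetric] divide_inverse)
    next
      case False
      then have "1 / X y \<le> 0" by (simp add: divide_nonpos_nonneg)
      then show ?thesis using False by (simp add: f_def ennreal_eq_0_iff[THEN iffD2])
    qed
    have "(\<integral>\<^sup>+y. ennreal (f y) \<partial>S) = ennreal (exp B - 1) * (\<integral>\<^sup>+y. ennreal (1 / X y) \<partial>S)"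
      by (subst nn_integral_cmult[symmetric]) (auto simp: fX)
    then show ?thesis using I by (simp add: ennreal_mult_less_top)
  qed
  let ?P = "PiM {1..<K} (\<lambda>_. S)"
  have pP: "prob_space ?P" using pS by (intro prob_space_PiM) auto
  interpret P: prob_space ?P by (rule pP)
  have Jbound: "Jstar K B S g1 \<le> ennreal (f g1)" if g1: "X g1 > 0" for g1
  proof -
    have adm: "admissible K B S g1 p"
      unfolding admissible_def
    proof (intro conjI allI impI)
      show "0 \<le> p k g" for k g using fn by (simp add: p_def)
      show "causal_policy p" unfolding causal_policy_def p_def by auto
      show "p k \<in> borel_measurable (PiM {..<K} (\<lambda>_. S))" if "k < K" for k
      proof -
        have "(\<lambda>g. f (g 0)) \<in> borel_measurable (PiM {..<K} (\<lambda>_. S))"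
          using K by (intro measurable_compose[OF measurable_component_singleton[where M="\<lambda>_. S" and I="{..<K}" and i=0] fm]) auto
        then show ?thesis unfolding p_def[abs_def] by (cases "k = 0") auto
      qed
      show "AE g in ?P. snd (remaining B (\<lambda>k. p k (g(0 := g1))) (g(0 := g1)) K) \<le> 0"
      proof (rule AE_I2)
        fix g :: "nat \<Rightarrow> snr"
        define G where "G = g(0 := g1)"
        have "remaining B (\<lambda>k. p k G) G K = remaining B (\<lambda>k. p k G) G (Suc 0)"
          using K by (intro remaining_const) (auto simp: p_def)
        moreover have "snd (remaining B (\<lambda>k. p k G) G (Suc 0)) \<le> 0"
          using B g1 eB by (cases g1) (auto simp: G_def p_def f_def X_def Let_def)
        ultimately show "snd (remaining B (\<lambda>k. p k (g(0 := g1))) (g(0 := g1)) K) \<le> 0"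
          by (simp add: G_def)
      qed
    qed
    have cost: "(\<Sum>k<K. p k (g(0 := g1))) = f g1" for g
      using K by (simp add: p_def)
    have "Jstar K B S g1 \<le> (\<integral>\<^sup>+g. ennreal (\<Sum>k<K. p k (g(0 := g1))) \<partial>?P)"
      unfolding Jstar_def using adm by (intro INF_lower) simp
    also have "\<dots> = (\<integral>\<^sup>+g. ennreal (f g1) \<partial>?P)" by (simp only: cost)
    also have "\<dots> = ennreal (f g1)"
      using P.emeasure_space_1 by (simp only: nn_integral_const mult_1_right)
    finally show ?thesis .
  qed
  have "AE g1 in S. Jstar K B S g1 \<le> ennreal (f g1)"
    using SC(3) by eventually_elim (rule Jbound, simp add: X_def)
  then have "(\<integral>\<^sup>+g1. Jstar K B S g1 \<partial>S) \<le> (\<integral>\<^sup>+g1. ennreal (f g1) \<partial>S)"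
    by (rule nn_integral_mono_AE)
  also have "\<dots> < \<infinity>" by (rule E)
  finally have "(\<integral>\<^sup>+g1. Jstar K B S g1 \<partial>S) < \<infinity>" .
  then show ?thesis
    unfolding nmese_def S_def[symmetric] B_def[symmetric] by (simp add: ennreal_mult_less_top)
qed


lemma norelay_infinite:
  fixes D :: "real measure"
  assumes D: "prob_space D" "sets D = sets borel" and D0: "emeasure D {..0} = 0"
    and c: "c > 0" and lower: "\<And>t. 0 \<le> t \<Longrightarrow> t \<le> 1 \<Longrightarrow> c * t \<le> measure D {..t}"
    and K: "K \<ge> 1" and R: "Reff > 0"
  shows "nmese K Reff (no_relay_slot D) = \<infinity>"
proof -
  interpret D: prob_space D by (rule D(1))
  define S where "S = no_relay_slot D"
  note SC = norelay_common[OF D D0, folded S_def]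
  have pS: "prob_space S" by (rule SC(1))
  interpret S: prob_space S by (rule pS)
  have [measurable_cong]: "sets S = sets (return borel 0 \<Otimes>\<^sub>M (D \<Otimes>\<^sub>M D))" by (simp only: S_def no_relay_slot_def)
  note [measurable_cong] = D(2)
  define B where "B = real K * Reff"
  have B: "B > 0" using K R by (simp add: B_def)
  have eB: "exp B - 1 > 0" using B by simp
  define X where "X y = fst (snd y)" for y :: snr
  have Xm[measurable]: "X \<in> borel_measurable S" unfolding X_def[abs_def] by measurable
  have Xpos: "AE y in S. X y > 0" using SC(3) by (simp add: X_def)
  have ginf: "(\<integral>\<^sup>+y. ennreal (1 / X y) \<partial>S) = \<infinity>"
  proof (rule inv_moment_inf[OF pS Xm Xpos c])
    fix t :: real assume t: "0 \<le> t" "t \<le> 1"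
    have "ennreal (c * t) \<le> ennreal (measure D {..t})" using lower[OF t] by (rule ennreal_leI)
    also have "\<dots> = emeasure D {..t}" using D(2) by (simp add: D.emeasure_eq_measure)
    also have "\<dots> = emeasure S {x \<in> space S. X x \<le> t}" using SC(5)[of t] by (simp add: X_def)
    finally show "ennreal (c * t) \<le> emeasure S {x \<in> space S. X x \<le> t}" .
  qed
  let ?P = "PiM {1..<K} (\<lambda>_. S)"
  have upd: "(\<lambda>g. g(0 := g1)) \<in> measurable ?P (PiM {..<K} (\<lambda>_. S))" for g1
  proof (rule measurable_fun_upd[where J="{1..<K}"])
    show "{..<K} = {1..<K} \<union> {0}" using K by auto
  qed (auto simp: SC(2))
  have AEsr: "AE g in ?P. \<forall>k\<in>{1..<K}. fst (g k) = 0"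
  proof (rule eventually_ball_finite)
    show "\<forall>k\<in>{1..<K}. AE g in ?P. fst (g k) = 0"
    proof
      fix k assume k: "k \<in> {1..<K}"
      show "AE g in ?P. fst (g k) = 0"
        by (rule AE_PiM_component[where M="\<lambda>_. S" and P="\<lambda>y. fst y = 0" and I="{1..<K}" and i=k]) (use pS SC(4) k in auto)
    qed
  qed simp
  have Jlb: "ennreal ((exp B - 1) / X g1) \<le> Jstar K B S g1" if g1: "fst g1 = 0" "X g1 > 0" for g1
    unfolding Jstar_def
  proof (rule INF_greatest)
    fix p assume "p \<in> {p. admissible K B S g1 p}"
    then have adm: "admissible K B S g1 p" by simp
    define q where "q k g = p k (g(0 := g1))" for k g
    show "ennreal ((exp B - 1) / X g1) \<le> (\<integral>\<^sup>+g. ennreal (\<Sum>k<K. p k (g(0 := g1))) \<partial>?P)"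
      unfolding q_def[symmetric]
    proof (rule norelay_lb[OF pS Xm Xpos ginf B g1(2) _ K])
      show "q k g = q k g'" if "\<And>j. 1 \<le> j \<Longrightarrow> j \<le> k \<Longrightarrow> g j = g' j" for k g g'
      proof -
        have "causal_policy p" using adm by (simp add: admissible_def)
        moreover have "\<forall>j\<le>k. (g(0 := g1)) j = (g'(0 := g1)) j" using that by auto
        ultimately show ?thesis unfolding q_def causal_policy_def by blast
      qed
      show "0 \<le> q k g" if "k < K" for k g using adm that by (simp add: admissible_def q_def)
      show "q k \<in> borel_measurable ?P" if "k < K" for k
      proof -
        have "p k \<in> borel_measurable (PiM {..<K} (\<lambda>_. S))" using adm that by (simp add: admissible_def)
        then show ?thesis unfolding q_def[abs_def] by (rule measurable_compose[OF upd])
      qed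
      have AEd: "AE g in ?P. snd (remaining B (\<lambda>k. p k (g(0 := g1))) (g(0 := g1)) K) \<le> 0"
        using adm by (simp add: admissible_def)
      show "AE g in ?P. B \<le> (\<Sum>k<K. ln (1 + q k g * (if k = 0 then X g1 else X (g k))))"
        using AEd AEsr
      proof eventually_elim
        case (elim g)
        define G where "G = g(0 := g1)"
        have "\<And>k. k < K \<Longrightarrow> fst (G k) = 0" using elim(2) g1(1) by (auto simp: G_def)
        then have "remaining B (\<lambda>k. p k G) G K = (B, B - (\<Sum>k<K. ln (1 + p k G * fst (snd (G k)))))"
          using B by (intro remaining_norelay) auto
        then have "B \<le> (\<Sum>k<K. ln (1 + p k G * fst (snd (G k))))" using elim(1) by (simp add: G_def)
        also have "(\<Sum>k<K. ln (1 + p k G * fst (snd (G k)))) = (\<Sum>k<K. ln (1 + q k g * (if k = 0 then X g1 else X (g k))))"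
          by (intro sum.cong) (auto simp: G_def q_def X_def)
        finally show ?case .
      qed
    qed
  qed
  have "AE g1 in S. ennreal (exp B - 1) * ennreal (1 / X g1) \<le> Jstar K B S g1"
    using Xpos SC(4)
  proof eventually_elim
    case (elim g1)
    have "ennreal (exp B - 1) * ennreal (1 / X g1) = ennreal ((exp B - 1) / X g1)"
      using eB elim by (simp add: ennreal_mult'[symmetric] divide_inverse)
    also have "\<dots> \<le> Jstar K B S g1" using elim by (intro Jlb) auto
    finally show ?case .
  qed
  then have "(\<integral>\<^sup>+g1. ennreal (exp B - 1) * ennreal (1 / X g1) \<partial>S) \<le> (\<integral>\<^sup>+g1. Jstar K B S g1 \<partial>S)"
    by (rule nn_integral_mono_AE)
  moreover have "(\<integral>\<^sup>+g1. ennreal (exp B - 1) * ennreal (1 / X g1) \<partial>S) = \<infinity>"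
    using eB ginf by (subst nn_integral_cmult) auto
  ultimately have "(\<integral>\<^sup>+g1. Jstar K B S g1 \<partial>S) = \<infinity>" by (simp add: top_unique)
  then show ?thesis
    unfolding nmese_def S_def[symmetric] B_def[symmetric] using K by simp
qed


lemma ncx2_basic:
  assumes "ncx2_dist (2 * real (Suc m)) lam D"
  shows "prob_space D" "sets D = sets borel" "\<And>t. 0 \<le> t \<Longrightarrow> t \<le> 1 \<Longrightarrow> measure D {..t} \<le> t"
    "\<And>t. 0 \<le> t \<Longrightarrow> t \<le> 1 \<Longrightarrow> measure D {..t} \<le> t^(Suc m)"
proof -
  show "prob_space D" "sets D = sets borel" using assms by (auto simp: ncx2_dist_def)
  show u: "measure D {..t} \<le> t^(Suc m)" if "0 \<le> t" "t \<le> 1" for t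
    using ncx2_upper[OF assms that] .
  show "measure D {..t} \<le> t" if t: "0 \<le> t" "t \<le> 1" for t
  proof -
    have "t^(Suc m) \<le> t^1" using t by (intro power_decreasing) auto
    then show ?thesis using u[OF t] by simp
  qed
qed

lemma case_v2:
  assumes D: "ncx2_dist 2 lam D" and R: "Reff > 0"
  shows "(\<forall>K::nat. K \<ge> 1 \<longrightarrow> nmese K Reff (no_relay_slot D) = \<infinity>) \<and>
         (\<forall>K::nat. K \<ge> 2 \<longrightarrow> nmese K Reff (relay_slot D) < \<infinity>)"
proof -
  have D': "ncx2_dist (2 * real (Suc 0)) lam D" using D by simp
  note b = ncx2_basic[OF D']
  have D0: "emeasure D {..0} = 0" using D_facts[OF b(1) b(2) b(3)] by simp
  obtain c where c: "c > 0" "\<And>t. 0 \<le> t \<Longrightarrow> t \<le> 1 \<Longrightarrow> c * t \<le> measure D {..t}"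
    using ncx2_lower[OF D] by blast
  show ?thesis
    using norelay_infinite[OF b(1) b(2) D0 c(1) c(2) _ R] relay_finite[OF b(1) b(2) b(3) _ R] by blast
qed

lemma case_s:
  assumes s: "s \<ge> 2" and D: "ncx2_dist (2 * real s) lam D" and R: "Reff > 0"
  shows "(\<forall>K::nat. K \<ge> 1 \<longrightarrow> nmese K Reff (no_relay_slot D) < \<infinity>) \<and>
         (\<forall>K::nat. K \<ge> 2 \<longrightarrow> nmese K Reff (relay_slot D) < \<infinity>)"
proof -
  obtain m where m: "s = Suc m" "m \<ge> 1" using s by (cases s) auto
  have D': "ncx2_dist (2 * real (Suc m)) lam D" using D m by simp
  note b = ncx2_basic[OF D']
  have F2: "measure D {..t} \<le> t^2" if t: "0 \<le> t" "t \<le> 1" for t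
  proof -
    have "t^(Suc m) \<le> t^2" using t m by (intro power_decreasing) auto
    then show ?thesis using b(4)[OF t] by simp
  qed
  show ?thesis
    using norelay_finite[OF b(1) b(2) F2 _ R] relay_finite[OF b(1) b(2) b(3) _ R] by blast
qed

theorem corollary2:
  fixes Reff :: real
  assumes "Reff > 0"
  shows
    "(\<forall>D. ncx2_dist 2 0 D \<longrightarrow>
        (\<forall>K::nat. K \<ge> 1 \<longrightarrow> nmese K Reff (no_relay_slot D) = \<infinity>) \<and>
        (\<forall>K::nat. K \<ge> 2 \<longrightarrow> nmese K Reff (relay_slot D) < \<infinity>))
   \<and> (\<forall>lam D. lam > 0 \<longrightarrow> ncx2_dist 2 lam D \<longrightarrow>
        (\<forall>K::nat. K \<ge> 1 \<longrightarrow> nmese K Reff (no_relay_slot D) = \<infinity>) \<and>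
        (\<forall>K::nat. K \<ge> 2 \<longrightarrow> nmese K Reff (relay_slot D) < \<infinity>))
   \<and> (\<forall>(s::nat) lam D. s \<ge> 2 \<longrightarrow> lam \<ge> 0 \<longrightarrow> ncx2_dist (2 * real s) lam D \<longrightarrow>
        (\<forall>K::nat. K \<ge> 1 \<longrightarrow> nmese K Reff (no_relay_slot D) < \<infinity>) \<and>
        (\<forall>K::nat. K \<ge> 2 \<longrightarrow> nmese K Reff (relay_slot D) < \<infinity>))"
proof -
  have c1: "\<forall>D. ncx2_dist 2 0 D \<longrightarrow>
        (\<forall>K::nat. K \<ge> 1 \<longrightarrow> nmese K Reff (no_relay_slot D) = \<infinity>) \<and>
        (\<forall>K::nat. K \<ge> 2 \<longrightarrow> nmese K Reff (relay_slot D) < \<infinity>)"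
    using case_v2 assms by blast
  have c2: "\<forall>lam D. lam > 0 \<longrightarrow> ncx2_dist 2 lam D \<longrightarrow>
        (\<forall>K::nat. K \<ge> 1 \<longrightarrow> nmese K Reff (no_relay_slot D) = \<infinity>) \<and>
        (\<forall>K::nat. K \<ge> 2 \<longrightarrow> nmese K Reff (relay_slot D) < \<infinity>)"
    using case_v2 assms by blast
  have c3: "\<forall>(s::nat) lam D. s \<ge> 2 \<longrightarrow> lam \<ge> 0 \<longrightarrow> ncx2_dist (2 * real s) lam D \<longrightarrow>
        (\<forall>K::nat. K \<ge> 1 \<longrightarrow> nmese K Reff (no_relay_slot D) < \<infinity>) \<and>
        (\<forall>K::nat. K \<ge> 2 \<longrightarrow> nmese K Reff (relay_slot D) < \<infinity>)"
    using case_s assms by blast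
  show ?thesis using c1 c2 c3 by blast
qed


end
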